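(* For every positive integer $n$, $|\mathrm{Sort}_n(\mathrm{SC}_{1\underline{32}})|=C_n$, where $C_n=\frac{1}{n+1}\binom{2n}{n}$ is the $n$-th Catalan number.
   Context: $\mathfrak S_n$ is the set of permutations of $\{1,\dots,n\}$. A vincular pattern is a permutation with some entries underlined; a sequence contains it if it has a subsequence with the same relative order in which entries corresponding to adjacent underlined entries occupy consecutive positions. An occurrence of $1\underline{32}$ is $a_i a_j a_{j+1}$ with $i<j$ and $a_i<a_{j+1}<a_j$. For a pattern $\sigma$, the map $\mathrm{SC}_\sigma$ acts on $\tau$: read entries left to right; when the next entry $x$ is read, if pushing $x$ yields a stack whose entries read top to bottom (stack adjacency = consecutive positions) avoid $\sigma$, push $x$; otherwise pop the top stack entry to the output and repeat. At the end pop all remaining entries; the output is $\mathrm{SC}_\sigma(\tau)$. West's stack-sorting map is $s=\mathrm{SC}_{21}$. $\mathrm{Sort}_n(\mathrm{SC}_\sigma)=\{\tau\in\mathfrak S_n : s(\mathrm{SC}_\sigma(\tau))=12\cdots n\}$. *)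

theory Defs
  imports Main
begin

text \<open>A vincular pattern is a pair (p, U): p is a permutation written as a list of length k,
and i \<in> U (for i + 1 < k) means that the entries at positions i and i+1 of p (0-indexed)
are both underlined (adjacent underlined entries), so the corresponding entries of an
occurrence must occupy consecutive positions.\<close>

type_synonym vpattern = "nat list \<times> nat set"

definition contains_vpat :: "vpattern \<Rightarrow> nat list \<Rightarrow> bool" where
  "contains_vpat \<sigma> xs \<longleftrightarrow>
     (\<exists>js :: nat list.
        length js = length (fst \<sigma>) \<and>
        sorted_wrt (<) js \<and>
        (\<forall>j \<in> set js. j < length xs) \<and>
        (\<forall>a < length js. \<forall>b < length js.
            (xs ! (js ! a) < xs ! (js ! b)) \<longleftrightarrow> (fst \<sigma> ! a < fst \<sigma> ! b)) \<and>
        (\<forall>i \<in> snd \<sigma>. Suc i < length js \<longrightarrow> js ! Suc i = Suc (js ! i)))"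

definition avoids_vpat :: "vpattern \<Rightarrow> nat list \<Rightarrow> bool" where
  "avoids_vpat \<sigma> xs \<longleftrightarrow> \<not> contains_vpat \<sigma> xs"

text \<open>Stacks are lists whose head is the top entry, so the list itself is the stack read
from top to bottom.\<close>

fun sc_insert :: "vpattern \<Rightarrow> nat \<Rightarrow> nat list \<Rightarrow> nat list \<Rightarrow> nat list \<times> nat list" where
  "sc_insert \<sigma> x [] out = ([x], out)"
| "sc_insert \<sigma> x (t # st) out =
     (if avoids_vpat \<sigma> (x # t # st) then (x # t # st, out)
      else sc_insert \<sigma> x st (out @ [t]))"

fun sc_run :: "vpattern \<Rightarrow> nat list \<Rightarrow> nat list \<Rightarrow> nat list \<Rightarrow> nat list" where
  "sc_run \<sigma> [] st out = out @ st"
| "sc_run \<sigma> (x # xs) st out =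
     (case sc_insert \<sigma> x st out of (st', out') \<Rightarrow> sc_run \<sigma> xs st' out')"

definition SC :: "vpattern \<Rightarrow> nat list \<Rightarrow> nat list" where
  "SC \<sigma> \<tau> = sc_run \<sigma> \<tau> [] []"

definition pat21 :: vpattern where "pat21 = ([2, 1], {})"
definition pat1_32 :: vpattern where "pat1_32 = ([1, 3, 2], {1})"

definition west_s :: "nat list \<Rightarrow> nat list" where "west_s = SC pat21"

definition perms :: "nat \<Rightarrow> nat list set" where
  "perms n = {\<tau>. distinct \<tau> \<and> set \<tau> = {1..n}}"

definition Sort_SC :: "nat \<Rightarrow> vpattern \<Rightarrow> nat list set" where
  "Sort_SC n \<sigma> = {\<tau> \<in> perms n. west_s (SC \<sigma> \<tau>) = [1..<n+1]}"

definition catalan :: "nat \<Rightarrow> nat" where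
  "catalan n = ((2 * n) choose n) div (n + 1)"

end

theory Submission
  imports Defs
begin

fun scs :: "vpattern \<Rightarrow> nat list \<Rightarrow> nat list \<Rightarrow> nat list \<Rightarrow> nat list \<times> nat list" where
  "scs \<sigma> [] st out = (st, out)"
| "scs \<sigma> (x # xs) st out = (case sc_insert \<sigma> x st out of (st', out') \<Rightarrow> scs \<sigma> xs st' out')"

lemma sc_run_append:
  "sc_run \<sigma> (xs @ ys) st out = (case scs \<sigma> xs st out of (st', out') \<Rightarrow> sc_run \<sigma> ys st' out')"
  by (induction xs arbitrary: st out) (auto split: prod.splits)

lemma scs_append:
  "scs \<sigma> (xs @ ys) st out = (case scs \<sigma> xs st out of (st', out') \<Rightarrow> scs \<sigma> ys st' out')"
  by (induction xs arbitrary: st out) (auto split: prod.splits)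

lemma sc_insert_shape:
  "sc_insert \<sigma> x st out = (st', out') \<Longrightarrow>
   \<exists>j \<le> length st. st' = x # drop j st \<and> out' = out @ take j st \<and>
     (drop j st \<noteq> [] \<longrightarrow> avoids_vpat \<sigma> (x # drop j st))"
proof (induction \<sigma> x st out rule: sc_insert.induct)
  case (1 \<sigma> x out)
  then show ?case by auto
next
  case (2 \<sigma> x t st out)
  show ?case
  proof (cases "avoids_vpat \<sigma> (x # t # st)")
    case True
    then show ?thesis using 2(2) by (intro exI[of _ 0]) auto
  next
    case False
    then have "sc_insert \<sigma> x st (out @ [t]) = (st', out')" using 2(2) by simp
    from 2(1)[OF False this] obtain j where j: "j \<le> length st" "st' = x # drop j st"
      "out' = (out @ [t]) @ take j st" "drop j st \<noteq> [] \<longrightarrow> avoids_vpat \<sigma> (x # drop j st)" by blast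
    show ?thesis using j by (intro exI[of _ "Suc j"]) auto
  qed
qed

lemma sc_insert_out:
  "\<exists>r. sc_insert \<sigma> x st out = (x # r, out @ take (length st - length r) st) \<and> r = drop (length st - length r) st"
  using sc_insert_shape[of \<sigma> x st out "fst (sc_insert \<sigma> x st out)" "snd (sc_insert \<sigma> x st out)"]
  by (metis diff_diff_cancel length_drop prod.collapse)

lemma scs_out:
  "\<exists>r. snd (scs \<sigma> xs st out) = out @ r \<and>
     set r \<union> set (fst (scs \<sigma> xs st out)) = set xs \<union> set st \<and>
     length r + length (fst (scs \<sigma> xs st out)) = length xs + length st"
proof (induction xs arbitrary: st out)
  case Nil
  then show ?case by simp
next
  case (Cons x xs)
  obtain st1 out1 where e: "sc_insert \<sigma> x st out = (st1, out1)" by fastforce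
  from sc_insert_shape[OF e] obtain j where j: "j \<le> length st" "st1 = x # drop j st" "out1 = out @ take j st" by blast
  from Cons[of st1 out1] obtain r where r: "snd (scs \<sigma> xs st1 out1) = out1 @ r"
    "set r \<union> set (fst (scs \<sigma> xs st1 out1)) = set xs \<union> set st1"
    "length r + length (fst (scs \<sigma> xs st1 out1)) = length xs + length st1" by blast
  have "set (take j st) \<union> set (drop j st) = set st"
    by (metis set_append append_take_drop_id)
  then show ?case using e j r
    by (intro exI[of _ "take j st @ r"]) auto
qed

lemma sc_run_out:
  "\<exists>r. sc_run \<sigma> xs st out = out @ r \<and> set r = set xs \<union> set st \<and> length r = length xs + length st"
proof -
  have "sc_run \<sigma> xs st out = sc_run \<sigma> (xs @ []) st out" by simp
  also have "\<dots> = snd (scs \<sigma> xs st out) @ fst (scs \<sigma> xs st out)"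
    unfolding sc_run_append by (simp split: prod.splits)
  finally show ?thesis using scs_out[of \<sigma> xs st out]
    by (metis append.assoc length_append set_append)
qed

lemma contains_1_32:
  "contains_vpat pat1_32 xs \<longleftrightarrow>
   (\<exists>i j. i < j \<and> Suc j < length xs \<and> xs!i < xs!(Suc j) \<and> xs!(Suc j) < xs!j)"
proof
  assume "contains_vpat pat1_32 xs"
  then obtain js where js: "length js = length [1,3,2::nat]" "sorted_wrt (<) js" "\<forall>j\<in>set js. j < length xs"
    "\<forall>a<length js. \<forall>b<length js. (xs ! (js ! a) < xs ! (js ! b)) \<longleftrightarrow> ([1,3,2::nat] ! a < [1,3,2] ! b)"
    "\<forall>i\<in>{1}. Suc i < length js \<longrightarrow> js ! Suc i = Suc (js ! i)"
    unfolding contains_vpat_def pat1_32_def fst_conv snd_conv by blast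
  from js(1) have "length js = 3" by simp
  then obtain a b c where abc: "js = [a,b,c]"
    by (auto simp: numeral_3_eq_3 length_Suc_conv)
  have 1: "xs!a < xs!c" using js(4) unfolding abc
    by (metis (no_types) One_nat_def length_Cons list.size(3) nth_Cons_0 nth_Cons_Suc numeral_2_eq_2 numeral_3_eq_3 lessI zero_less_Suc Suc_less_eq less_numeral_extra(1) one_less_numeral_iff semiring_norm(76))
  have 2: "xs!c < xs!b" using js(4) unfolding abc
    by (metis (no_types) One_nat_def length_Cons list.size(3) nth_Cons_0 nth_Cons_Suc numeral_2_eq_2 numeral_3_eq_3 lessI zero_less_Suc Suc_less_eq less_numeral_extra(1) one_less_numeral_iff semiring_norm(76))
  have 3: "a < b" "c = Suc b" "c < length xs" using js(2,3,5) unfolding abc by auto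
  show "\<exists>i j. i < j \<and> Suc j < length xs \<and> xs!i < xs!(Suc j) \<and> xs!(Suc j) < xs!j"
    using 1 2 3 by blast
next
  assume "\<exists>i j. i < j \<and> Suc j < length xs \<and> xs!i < xs!(Suc j) \<and> xs!(Suc j) < xs!j"
  then obtain i j where ij: "i < j" "Suc j < length xs" "xs!i < xs!(Suc j)" "xs!(Suc j) < xs!j" by blast
  have "\<forall>a<3. \<forall>b<3. (xs ! ([i,j,Suc j] ! a) < xs ! ([i,j,Suc j] ! b)) \<longleftrightarrow> ([1,3,2::nat] ! a < [1,3,2] ! b)"
    using ij by (auto simp: numeral_3_eq_3 less_Suc_eq)
  then show "contains_vpat pat1_32 xs"
    unfolding contains_vpat_def pat1_32_def using ij
    by (intro exI[of _ "[i,j,Suc j]"]) auto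
qed

lemma contains_21:
  "contains_vpat pat21 xs \<longleftrightarrow> (\<exists>i j. i < j \<and> j < length xs \<and> xs!j < xs!i)"
proof
  assume "contains_vpat pat21 xs"
  then obtain js where js: "length js = length [2,1::nat]" "sorted_wrt (<) js" "\<forall>j\<in>set js. j < length xs"
    "\<forall>a<length js. \<forall>b<length js. (xs ! (js ! a) < xs ! (js ! b)) \<longleftrightarrow> ([2,1::nat] ! a < [2,1] ! b)"
    unfolding contains_vpat_def pat21_def fst_conv snd_conv by blast
  from js(1) have "length js = 2" by simp
  then obtain a b where abc: "js = [a,b]"
    by (auto simp: numeral_2_eq_2 length_Suc_conv)
  have "xs!b < xs!a" using js(4) unfolding abc
    by (metis (no_types) length_Cons list.size(3) nth_Cons_0 nth_Cons_Suc numeral_2_eq_2 lessI zero_less_Suc One_nat_def one_less_numeral_iff semiring_norm(76))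
  then show "\<exists>i j. i < j \<and> j < length xs \<and> xs!j < xs!i" using js(2,3) unfolding abc by auto
next
  assume "\<exists>i j. i < j \<and> j < length xs \<and> xs!j < xs!i"
  then obtain i j where ij: "i < j" "j < length xs" "xs!j < xs!i" by blast
  have "\<forall>a<2. \<forall>b<2. (xs ! ([i,j] ! a) < xs ! ([i,j] ! b)) \<longleftrightarrow> ([2,1::nat] ! a < [2,1] ! b)"
    using ij by (auto simp: numeral_2_eq_2 less_Suc_eq)
  then show "contains_vpat pat21 xs"
    unfolding contains_vpat_def pat21_def using ij
    by (intro exI[of _ "[i,j]"]) auto
qed

lemma avoids21_sorted: "sorted_wrt (<) xs \<Longrightarrow> avoids_vpat pat21 xs"
  unfolding avoids_vpat_def contains_21 by (auto simp: sorted_wrt_iff_nth_less dest: less_imp_not_less)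

lemma west_insert:
  "sorted_wrt (<) st \<Longrightarrow> x \<notin> set st \<Longrightarrow>
   sc_insert pat21 x st out = (x # filter (\<lambda>y. x < y) st, out @ filter (\<lambda>y. y < x) st)"
proof (induction st arbitrary: out)
  case Nil
  then show ?case by simp
next
  case (Cons t st)
  show ?case
  proof (cases "x < t")
    case True
    then have "sorted_wrt (<) (x # t # st)" using Cons.prems by auto
    then have "avoids_vpat pat21 (x # t # st)" by (rule avoids21_sorted)
    moreover have "filter (\<lambda>y. x < y) (t # st) = t # st" "filter (\<lambda>y. y < x) (t # st) = []"
      using True Cons.prems by (auto simp: filter_id_conv filter_empty_conv)
    ultimately show ?thesis by simp
  next
    case False
    then have tx: "t < x" using Cons.prems by auto
    have "contains_vpat pat21 (x # t # st)" unfolding contains_21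
      using tx by (intro exI[of _ 0] exI[of _ 1]) auto
    then have "\<not> avoids_vpat pat21 (x # t # st)" by (simp add: avoids_vpat_def)
    then show ?thesis using Cons tx by auto
  qed
qed

lemma west_incr:
  "sorted_wrt (<) st \<Longrightarrow> sorted_wrt (<) I \<Longrightarrow> set st \<inter> set I = {} \<Longrightarrow>
   \<exists>L. sc_run pat21 I st out = out @ L \<and> sorted_wrt (<) L \<and> set L = set st \<union> set I"
proof (induction I arbitrary: st out)
  case Nil
  then show ?case by auto
next
  case (Cons x I)
  have xs: "x \<notin> set st" using Cons.prems by auto
  let ?st' = "x # filter (\<lambda>y. x < y) st" and ?o = "filter (\<lambda>y. y < x) st"
  have e: "sc_run pat21 (x # I) st out = sc_run pat21 I ?st' (out @ ?o)"
    using west_insert[OF Cons.prems(1) xs] by simp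
  have s1: "sorted_wrt (<) ?st'" using Cons.prems(1) by (auto simp: sorted_wrt_filter)
  have s2: "sorted_wrt (<) I" using Cons.prems(2) by simp
  have s3: "set ?st' \<inter> set I = {}" using Cons.prems by auto
  from Cons.IH[OF s1 s2 s3] obtain L where L: "sc_run pat21 I ?st' (out @ ?o) = (out @ ?o) @ L"
    "sorted_wrt (<) L" "set L = set ?st' \<union> set I" by blast
  have lt: "\<forall>a\<in>set ?o. \<forall>b\<in>set L. a < b"
  proof (intro ballI)
    fix a b assume a: "a \<in> set ?o" and b: "b \<in> set L"
    have "a < x" using a by simp
    moreover have "x \<le> b" using b L(3) Cons.prems(2) by auto
    ultimately show "a < b" by simp
  qed
  have "sorted_wrt (<) ?o" using Cons.prems(1) by (rule sorted_wrt_filter)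
  then have "sorted_wrt (<) (?o @ L)"
    using L(2) lt unfolding sorted_wrt_append by blast
  moreover have "set (?o @ L) = set st \<union> set (x # I)"
  proof -
    have "set st = set ?o \<union> set (filter (\<lambda>y. x < y) st)" using xs by auto (metis linorder_neqE_nat)
    then show ?thesis using L(3) by auto
  qed
  ultimately show ?case using e L(1) by (intro exI[of _ "?o @ L"]) simp
qed

lemma west_decr:
  "sorted_wrt (>) D \<Longrightarrow> (\<forall>y\<in>set st. \<forall>d\<in>set D. d < y) \<Longrightarrow> sorted_wrt (<) st \<Longrightarrow>
   scs pat21 D st out = (rev D @ st, out)"
proof (induction D arbitrary: st)
  case Nil
  then show ?case by simp
next
  case (Cons x D)
  have "sorted_wrt (<) (x # st)" using Cons.prems by auto
  then have ins: "sc_insert pat21 x st out = (x # st, out)"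
  proof (cases st)
    case (Cons a list)
    then show ?thesis using avoids21_sorted[OF \<open>sorted_wrt (<) (x # st)\<close>] by simp
  qed simp
  have "scs pat21 D (x # st) out = (rev D @ x # st, out)"
    using Cons.prems by (intro Cons.IH) auto
  then show ?case using ins by simp
qed

lemma west_V:
  assumes "sorted_wrt (>) D" "sorted_wrt (<) I" "set D \<inter> set I = {}"
  shows "\<exists>L. west_s (D @ I) = L \<and> sorted_wrt (<) L \<and> set L = set D \<union> set I"
proof -
  have d: "scs pat21 D [] [] = (rev D, [])" using west_decr[of D "[]" "[]"] assms by simp
  have "sorted_wrt (<) (rev D)" using assms(1) by (simp add: sorted_wrt_rev)
  from west_incr[OF this assms(2), of "[]"] assms(3) obtain L where
    "sc_run pat21 I (rev D) [] = L" "sorted_wrt (<) L" "set L = set D \<union> set I" by auto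
  then show ?thesis unfolding west_s_def SC_def sc_run_append d by auto
qed

lemma west_231:
  assumes "Ol = pre @ v # post" "u \<in> set pre" "w \<in> set post" "w < u" "u < v"
  shows "\<not> sorted_wrt (<) (west_s Ol)"
proof
  assume srt: "sorted_wrt (<) (west_s Ol)"
  obtain st0 out0 where e0: "scs pat21 pre [] [] = (st0, out0)" by fastforce
  obtain st1 out1 where e1: "sc_insert pat21 v st0 out0 = (st1, out1)" by fastforce
  from scs_out[of pat21 pre "[]" "[]"] e0 have u0: "u \<in> set out0 \<union> set st0" using assms(2) by auto
  from sc_insert_shape[OF e1] obtain j where j: "st1 = v # drop j st0" "out1 = out0 @ take j st0"
    "drop j st0 \<noteq> [] \<longrightarrow> avoids_vpat pat21 (v # drop j st0)" by blast
  have "u \<notin> set (drop j st0)"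
  proof
    assume a: "u \<in> set (drop j st0)"
    then obtain k where k: "k < length (drop j st0)" "drop j st0 ! k = u" by (meson in_set_conv_nth)
    have "contains_vpat pat21 (v # drop j st0)" unfolding contains_21
      using k assms(5) by (intro exI[of _ 0] exI[of _ "Suc k"]) auto
    then show False using j(3) a by (auto simp: avoids_vpat_def)
  qed
  then have u1: "u \<in> set out1" using u0 j(2) by (metis Un_iff append_take_drop_id set_append)
  have "west_s Ol = sc_run pat21 post st1 out1"
    unfolding west_s_def SC_def assms(1) sc_run_append by (simp add: e0 e1)
  moreover from sc_run_out[of pat21 post st1 out1] obtain r where
    "sc_run pat21 post st1 out1 = out1 @ r" "set r = set post \<union> set st1" by blast
  ultimately have "west_s Ol = out1 @ r" "w \<in> set r" using assms(3) by auto
  then have "sorted_wrt (<) (out1 @ r)" using srt by simp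
  then have "u < w" using u1 \<open>w \<in> set r\<close> unfolding sorted_wrt_append by blast
  then show False using assms(4) by simp
qed


lemma V_avoid:
  assumes "sorted_wrt (>) D" "sorted_wrt (<) I"
  shows "avoids_vpat pat1_32 (D @ I)"
proof -
  have False if ij: "i < j" "Suc j < length (D @ I)" "(D @ I)!i < (D @ I)!Suc j"
    "(D @ I)!Suc j < (D @ I)!j" for i j
  proof (cases "j < length D")
    case True
    then have e: "(D @ I)!i = D!i" "(D @ I)!j = D!j" using ij(1) by (auto simp: nth_append)
    have "D!j < D!i" using sorted_wrt_nth_less[OF assms(1) ij(1) True] by simp
    then show False using ij(3,4) e by simp
  next
    case False
    then have e: "(D @ I)!j = I!(j - length D)" "(D @ I)!Suc j = I!Suc (j - length D)"
      by (auto simp: nth_append Suc_diff_le)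
    have "Suc (j - length D) < length I" using ij(2) False by auto
    then have "I!(j - length D) < I!Suc (j - length D)"
      using sorted_wrt_nth_less[OF assms(2)] by simp
    then show False using ij(4) e by simp
  qed
  then show ?thesis unfolding avoids_vpat_def contains_1_32 by blast
qed

lemma pop_all:
  assumes "\<forall>a\<in>set as. b < a" "x < b" "sorted_wrt (<) (b # rest)"
  shows "sc_insert pat1_32 x (as @ b # rest) out = (x # b # rest, out @ as)"
  using assms(1)
proof (induction as arbitrary: out)
  case Nil
  have "sorted_wrt (<) (x # b # rest)" using assms(2,3) by auto
  then have "avoids_vpat pat1_32 ([] @ x # b # rest)" by (intro V_avoid) auto
  then show ?case by simp
next
  case (Cons a as)
  let ?V = "(a # as) @ b # rest"
  have "?V ! length as = (a # as) ! length as" by (rule nth_append_left) simp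
  then have g: "(x # ?V) ! Suc (length as) = (a # as) ! length as" by (simp only: nth_Cons_Suc)
  have "(a # as) ! length as \<in> set (a # as)" by (rule nth_mem) simp
  then have f1: "b < (x # ?V) ! Suc (length as)" using Cons.prems g by auto
  have f2: "(x # ?V) ! Suc (Suc (length as)) = b" by (simp add: nth_append)
  have "contains_vpat pat1_32 (x # ?V)"
    unfolding contains_1_32 using f1 f2 assms(2) by (intro exI[of _ 0] exI[of _ "Suc (length as)"]) auto
  then have "\<not> avoids_vpat pat1_32 (x # a # as @ b # rest)" by (simp add: avoids_vpat_def)
  then show ?case using Cons by simp
qed

lemma blocked_hd:
  assumes "sorted_wrt (>) (a # as1)" "\<forall>y\<in>set (a # as1). b < y" "sorted_wrt (<) (b # rest)"
    "b < x" "contains_vpat pat1_32 (x # (a # as1) @ b # rest)"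
  shows "as1 \<noteq> [] \<and> x < hd as1"
proof -
  let ?V = "(a # as1) @ b # rest"
  have av: "avoids_vpat pat1_32 ?V" using assms(1,3) by (rule V_avoid)
  from assms(5) obtain i j where ij: "i < j" "Suc j < length (x # ?V)"
    "(x # ?V)!i < (x # ?V)!Suc j" "(x # ?V)!Suc j < (x # ?V)!j"
    unfolding contains_1_32 by blast
  obtain j' where j': "j = Suc j'" using ij(1) by (cases j) auto
  have i0: "i = 0"
  proof (rule ccontr)
    assume "i \<noteq> 0"
    then obtain i' where i': "i = Suc i'" by (cases i) auto
    have "contains_vpat pat1_32 ?V" unfolding contains_1_32
      using ij i' j' by (intro exI[of _ i'] exI[of _ j']) auto
    then show False using av by (simp add: avoids_vpat_def)
  qed
  have h1: "x < ?V ! Suc j'" and h2: "?V ! Suc j' < ?V ! j'" and h3: "Suc j' < length ?V"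
    using ij i0 j' by auto
  consider "Suc j' < length (a # as1)" | "Suc j' = length (a # as1)" | "Suc j' > length (a # as1)"
    by linarith
  then show ?thesis
  proof cases
    case 1
    then have jl: "j' < length as1" by simp
    then have ne: "as1 \<noteq> []" by auto
    have e: "?V ! Suc j' = as1 ! j'" using 1 by (simp add: nth_append)
    have "as1 ! j' \<le> as1 ! 0"
    proof (cases j')
      case (Suc k)
      have "sorted_wrt (>) as1" using assms(1) by simp
      from sorted_wrt_nth_less[OF this _ jl, of 0] Suc show ?thesis by simp
    qed simp
    then show ?thesis using h1 e ne by (simp add: hd_conv_nth)
  next
    case 2
    then have "?V ! Suc j' = b" by (simp add: nth_append)
    then show ?thesis using h1 assms(4) by simp
  next
    case 3
    let ?k = "j' - length (a # as1)"
    have e: "?V ! j' = (b # rest) ! ?k" "?V ! Suc j' = (b # rest) ! Suc ?k"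
      using 3 by (auto simp: nth_append Suc_diff_le)
    have "Suc ?k < length (b # rest)" using h3 3 by auto
    then have "(b # rest) ! ?k < (b # rest) ! Suc ?k" by (intro sorted_wrt_nth_less[OF assms(3)]) auto
    then show ?thesis using h2 e by simp
  qed
qed

lemma push_pop:
  assumes "\<forall>a\<in>set as. b < a" "sorted_wrt (>) as" "sorted_wrt (<) (b # rest)" "b < x"
  shows "\<exists>pre as'. as = pre @ as' \<and> sc_insert pat1_32 x (as @ b # rest) out = (x # as' @ b # rest, out @ pre)
     \<and> (as \<noteq> [] \<and> x < hd as \<longrightarrow> as' \<noteq> [] \<and> x < hd as')"
  using assms(1,2)
proof (induction as arbitrary: out)
  case Nil
  have "avoids_vpat pat1_32 ([x] @ b # rest)" using assms(3) by (intro V_avoid) auto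
  then show ?case by simp
next
  case (Cons a as1)
  show ?case
  proof (cases "avoids_vpat pat1_32 (x # a # as1 @ b # rest)")
    case True
    then show ?thesis by (intro exI[of _ "[]"] exI[of _ "a # as1"]) simp
  next
    case False
    then have e: "sc_insert pat1_32 x ((a # as1) @ b # rest) out = sc_insert pat1_32 x (as1 @ b # rest) (out @ [a])"
      by simp
    have p1: "\<forall>y\<in>set as1. b < y" "sorted_wrt (>) as1" using Cons.prems by auto
    from Cons.IH[OF p1, of "out @ [a]"] obtain pre as' where
      IH: "as1 = pre @ as'" "sc_insert pat1_32 x (as1 @ b # rest) (out @ [a]) = (x # as' @ b # rest, (out @ [a]) @ pre)"
      "as1 \<noteq> [] \<and> x < hd as1 \<longrightarrow> as' \<noteq> [] \<and> x < hd as'" by blast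
    have "contains_vpat pat1_32 (x # (a # as1) @ b # rest)" using False by (simp add: avoids_vpat_def)
    then have h: "as1 \<noteq> [] \<and> x < hd as1" using blocked_hd[of a as1 b rest x] Cons.prems assms(3,4) by blast
    have "as' \<noteq> [] \<and> x < hd as'" using IH(3) h by blast
    moreover have "sc_insert pat1_32 x ((a # as1) @ b # rest) out = (x # as' @ b # rest, out @ (a # pre))"
      using IH(2) e by simp
    ultimately show ?thesis using IH(1) by (intro exI[of _ "a # pre"] exI[of _ as']) simp
  qed
qed

lemma below:
  "\<exists>w1 w2. sc_run \<sigma> xs (us @ y # st) out = out @ w1 @ y # w2 \<and> set us \<subseteq> set w1 \<and> set st \<subseteq> set w2"
proof (induction xs arbitrary: us st out)
  case Nil
  then show ?case by auto
next
  case (Cons x xs)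
  obtain st1 out1 where e: "sc_insert \<sigma> x (us @ y # st) out = (st1, out1)" by fastforce
  from sc_insert_shape[OF e] obtain j where j: "j \<le> length (us @ y # st)"
    "st1 = x # drop j (us @ y # st)" "out1 = out @ take j (us @ y # st)" by blast
  have run: "sc_run \<sigma> (x # xs) (us @ y # st) out = sc_run \<sigma> xs st1 out1" using e by simp
  show ?case
  proof (cases "j \<le> length us")
    case True
    then have d: "st1 = (x # drop j us) @ y # st" "out1 = out @ take j us" using j by auto
    from Cons.IH[of "x # drop j us" st out1] obtain w1 w2 where
      w: "sc_run \<sigma> xs ((x # drop j us) @ y # st) out1 = out1 @ w1 @ y # w2"
      "set (x # drop j us) \<subseteq> set w1" "set st \<subseteq> set w2" by blast
    have "set us = set (take j us) \<union> set (drop j us)" by (metis append_take_drop_id set_append)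
    then have "set us \<subseteq> set (take j us @ w1)" using w(2) by auto
    then show ?thesis using run d w by (intro exI[of _ "take j us @ w1"] exI[of _ w2]) auto
  next
    case False
    define k where "k = j - length us - 1"
    have jk: "j = length us + Suc k" using False k_def by auto
    have d: "st1 = x # drop k st" "out1 = out @ us @ y # take k st" using j jk by auto
    from sc_run_out[of \<sigma> xs st1 out1] obtain r where r: "sc_run \<sigma> xs st1 out1 = out1 @ r"
      "set r = set xs \<union> set st1" by blast
    have "set st = set (take k st) \<union> set (drop k st)" by (metis append_take_drop_id set_append)
    then have "set st \<subseteq> set (take k st @ r)" using r(2) d(1) by auto
    then show ?thesis using run d r by (intro exI[of _ us] exI[of _ "take k st @ r"]) auto
  qed
qed


type_synonym gst = "nat \<times> nat \<times> nat \<times> nat"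

fun ok :: "gst \<Rightarrow> nat \<Rightarrow> bool" where
  "ok (b, p, m, c) x = (x < b \<or> (p < x \<and> x < m))"

fun step :: "gst \<Rightarrow> nat \<Rightarrow> gst" where
  "step (b, p, m, c) x = (if x < b then (x, x, min m c, min m c) else (b, x, m, min c x))"

fun gd :: "gst \<Rightarrow> nat list \<Rightarrow> bool" where
  "gd s [] = True"
| "gd s (x # xs) = (ok s x \<and> gd (step s x) xs)"

lemma gd_append: "gd s (xs @ ys) = (gd s xs \<and> gd (foldl step s xs) ys)"
  by (induction xs arbitrary: s) auto

definition init :: "nat \<Rightarrow> gst" where "init K = (K, 0, K, K)"

fun InvLA :: "nat \<Rightarrow> gst \<Rightarrow> nat list \<Rightarrow> nat list \<Rightarrow> nat list \<Rightarrow> bool" where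
  "InvLA K (b, p, m, c) L A out = (L \<noteq> [] \<and> sorted_wrt (>) L \<and> last L = b \<and> sorted_wrt (<) A \<and>
     (\<forall>a\<in>set A. b < a \<and> a < K) \<and> p = (if A = [] then b else last A) \<and> sorted_wrt (>) out \<and>
     (\<forall>d\<in>set out. b < d \<and> (\<forall>a\<in>set A. a < d)) \<and> m = (if out = [] then K else last out) \<and>
     c = (if A = [] then m else hd A))"

lemma last_le_dec: "sorted_wrt (>) (L::nat list) \<Longrightarrow> l \<in> set L \<Longrightarrow> last L \<le> l"
  by (induction L) (auto simp: less_imp_le)

lemma le_last_inc: "sorted_wrt (<) (A::nat list) \<Longrightarrow> a \<in> set A \<Longrightarrow> a \<le> last A"
  by (induction A) (auto simp: less_imp_le)

lemma hd_le_inc: "sorted_wrt (<) (A::nat list) \<Longrightarrow> a \<in> set A \<Longrightarrow> hd A \<le> a"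
  by (induction A) (auto simp: less_imp_le)

lemma revL: "L \<noteq> [] \<Longrightarrow> rev L = last L # rev (butlast L)"
  by (metis append_butlast_last_id rev.simps(2) rev_rev_ident rev_swap)

lemma push_simple: "avoids_vpat \<sigma> (x # st) \<Longrightarrow> st \<noteq> [] \<Longrightarrow> sc_insert \<sigma> x st out = (x # st, out)"
  by (cases st) auto

lemma inv_step:
  assumes inv: "InvLA K (b, p, m, c) L A out" and okx: "ok (b, p, m, c) x" and xK: "x < K"
  shows "\<exists>L' A' out'. sc_insert pat1_32 x (rev A @ rev L) out = (rev A' @ rev L', out') \<and>
           InvLA K (step (b, p, m, c) x) L' A' out'"
proof -
  define rest where "rest = rev (butlast L)"
  from inv have Lne: "L \<noteq> []" and Lb: "last L = b" by auto
  have rL: "rev L = b # rest" using revL[OF Lne] Lb rest_def by simp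
  have "sorted_wrt (>) L" using inv by simp
  then have "sorted_wrt (<) (rev L)" by (simp add: sorted_wrt_rev)
  then have sL: "sorted_wrt (<) (b # rest)" using rL by simp
  have Lge: "\<forall>l\<in>set L. b \<le> l" using inv last_le_dec by auto
  show ?thesis
  proof (cases "x < b")
    case True
    have "\<forall>a\<in>set (rev A). b < a" using inv by simp
    from pop_all[OF this True sL]
    have ins: "sc_insert pat1_32 x (rev A @ rev L) out = (x # b # rest, out @ rev A)"
      unfolding rL .
    have st: "step (b, p, m, c) x = (x, x, min m c, min m c)" using True by simp
    have "InvLA K (x, x, min m c, min m c) (L @ [x]) [] (out @ rev A)"
    proof -
      have "sorted_wrt (>) L" using inv by simp
      then have a1: "sorted_wrt (>) (L @ [x])" using Lge True unfolding sorted_wrt_append by auto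
      have a2: "sorted_wrt (>) (out @ rev A)" using inv by (auto simp: sorted_wrt_append sorted_wrt_rev)
      have a3: "\<forall>d\<in>set (out @ rev A). x < d" using inv True by auto
      have a4: "min m c = (if out @ rev A = [] then K else last (out @ rev A))"
      proof (cases "A = []")
        case True
        then show ?thesis using inv by auto
      next
        case False
        then have "hd A \<in> set A" by simp
        then have "hd A < m" using inv False by (cases "out = []") (auto intro: last_in_set)
        then show ?thesis using inv False by (simp add: last_rev)
      qed
      show ?thesis using a1 a2 a3 a4 by simp
    qed
    moreover have "rev [] @ rev (L @ [x]) = x # b # rest" using rL by simp
    ultimately show ?thesis using ins st by (metis)
  next
    case False
    then have px: "p < x" "x < m" using okx by auto
    have bx: "b < x"
    proof (cases "A = []")
      case True then show ?thesis using px inv by auto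
    next
      case False
      then have "last A \<in> set A" by simp
      then have h1: "b < last A" using inv by auto
      have h2: "p = last A" using inv False by simp
      show ?thesis using h1 h2 px by linarith
    qed
    have xA: "\<forall>a\<in>set A. a < x" using px inv le_last_inc by (cases "A = []") fastforce+
    have "sorted_wrt (>) (x # rev A)" using inv xA by (auto simp: sorted_wrt_rev)
    then have "avoids_vpat pat1_32 ((x # rev A) @ b # rest)" using sL by (rule V_avoid)
    then have ins: "sc_insert pat1_32 x (rev A @ rev L) out = (x # rev A @ rev L, out)"
      unfolding rL by (intro push_simple) auto
    have st: "step (b, p, m, c) x = (b, x, m, min c x)" using False by simp
    have "InvLA K (b, x, m, min c x) L (A @ [x]) out"
    proof -
      have m1: "\<forall>d\<in>set out. x < d" using inv px last_le_dec
        by (cases "out = []") (auto, fastforce)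
      have m2: "min c x = hd (A @ [x])"
      proof (cases "A = []")
        case True then show ?thesis using inv px by auto
      next
        case False
        then have "hd A < x" using xA by simp
        then show ?thesis using inv False by auto
      qed
      show ?thesis using inv xA bx xK m1 m2 by (auto simp: sorted_wrt_append)
    qed
    moreover have "rev (A @ [x]) @ rev L = x # rev A @ rev L" by simp
    ultimately show ?thesis using ins st by metis
  qed
qed

lemma inv_run_good:
  "InvLA K s L A out \<Longrightarrow> gd s xs \<Longrightarrow> \<forall>x\<in>set xs. x < K \<Longrightarrow>
   \<exists>D I. sc_run pat1_32 xs (rev A @ rev L) out = D @ I \<and> sorted_wrt (>) D \<and> sorted_wrt (<) I"
proof (induction xs arbitrary: s L A out)
  case Nil
  obtain b p m c where s: "s = (b, p, m, c)" by (cases s) auto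
  have "sorted_wrt (>) (out @ rev A)" using Nil s by (auto simp: sorted_wrt_append sorted_wrt_rev)
  moreover have "sorted_wrt (<) (rev L)" using Nil s by (auto simp: sorted_wrt_rev)
  ultimately show ?case by (intro exI[of _ "out @ rev A"] exI[of _ "rev L"]) simp
next
  case (Cons x xs)
  obtain b p m c where s: "s = (b, p, m, c)" by (cases s) auto
  from inv_step[of K b p m c L A out x] Cons.prems s obtain L' A' out' where
    e: "sc_insert pat1_32 x (rev A @ rev L) out = (rev A' @ rev L', out')"
    "InvLA K (step (b, p, m, c) x) L' A' out'" by auto
  have "gd (step (b, p, m, c) x) xs" using Cons.prems s by simp
  from Cons.IH[OF e(2) this] Cons.prems obtain D I where
    "sc_run pat1_32 xs (rev A' @ rev L') out' = D @ I" "sorted_wrt (>) D" "sorted_wrt (<) I" by auto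
  then show ?case using e(1) by (intro exI[of _ D] exI[of _ I]) simp
qed

lemma inv_scs:
  "InvLA K s L A out \<Longrightarrow> gd s xs \<Longrightarrow> \<forall>x\<in>set xs. x < K \<Longrightarrow>
   \<exists>L' A' out'. scs pat1_32 xs (rev A @ rev L) out = (rev A' @ rev L', out') \<and> InvLA K (foldl step s xs) L' A' out'"
proof (induction xs arbitrary: s L A out)
  case Nil
  then show ?case by auto
next
  case (Cons x xs)
  obtain b p m c where s: "s = (b, p, m, c)" by (cases s) auto
  from inv_step[of K b p m c L A out x] Cons.prems s obtain L' A' out' where
    e: "sc_insert pat1_32 x (rev A @ rev L) out = (rev A' @ rev L', out')"
    "InvLA K (step (b, p, m, c) x) L' A' out'" by auto
  have "gd (step (b, p, m, c) x) xs" using Cons.prems s by simp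
  from Cons.IH[OF e(2) this] Cons.prems obtain L'' A'' out'' where
    "scs pat1_32 xs (rev A' @ rev L') out' = (rev A'' @ rev L'', out'')"
    "InvLA K (foldl step (step (b, p, m, c) x) xs) L'' A'' out''" by auto
  then show ?case using e(1) s by (intro exI[of _ L''] exI[of _ A''] exI[of _ out'']) simp
qed

lemma inv_bad:
  assumes inv: "InvLA K (b, p, m, c) L A out" and nok: "\<not> ok (b, p, m, c) x" and xK: "x < K"
    and fresh: "x \<notin> set L \<union> set A \<union> set out"
  shows "\<exists>st' out'. sc_insert pat1_32 x (rev A @ rev L) out = (st', out') \<and>
    (\<forall>xs. \<exists>pre v post u w. sc_run pat1_32 xs st' out' = pre @ v # post \<and> u \<in> set pre \<and> w \<in> set post \<and> w < u \<and> u < v)"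
proof -
  define rest where "rest = rev (butlast L)"
  from inv have Lne: "L \<noteq> []" and Lb: "last L = b" by auto
  have rL: "rev L = b # rest" using revL[OF Lne] Lb rest_def by simp
  have "sorted_wrt (>) L" using inv by simp
  then have "sorted_wrt (<) (rev L)" by (simp add: sorted_wrt_rev)
  then have sL: "sorted_wrt (<) (b # rest)" using rL by simp
  have bL: "b \<in> set L" using Lne Lb by auto
  have "\<not> x < b" using nok by simp
  moreover have "x \<noteq> b" using bL fresh by auto
  ultimately have bx: "b < x" by simp
  have a1: "\<forall>a\<in>set (rev A). b < a" using inv by simp
  have a2: "sorted_wrt (>) (rev A)" using inv by (simp add: sorted_wrt_rev)
  from push_pop[OF a1 a2 sL bx, of out] obtain pre as' where
    pp: "rev A = pre @ as'" "sc_insert pat1_32 x (rev A @ b # rest) out = (x # as' @ b # rest, out @ pre)"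
    "rev A \<noteq> [] \<and> x < hd (rev A) \<longrightarrow> as' \<noteq> [] \<and> x < hd as'" by blast
  have ins: "sc_insert pat1_32 x (rev A @ rev L) out = (x # as' @ b # rest, out @ pre)" using pp(2) rL by simp
  have "\<not> p < x \<or> \<not> x < m" using nok by auto
  then show ?thesis
  proof
    assume npx: "\<not> p < x"
    have Ane: "A \<noteq> []"
    proof
      assume "A = []"
      then have "p = b" using inv by simp
      then show False using npx bx by simp
    qed
    then have pA: "p = last A" "last A \<in> set A" using inv by auto
    then have "x < p" using npx fresh by (metis UnI1 UnI2 linorder_neqE_nat)
    then have "as' \<noteq> [] \<and> x < hd as'" using pp(3) Ane pA by (simp add: hd_rev)
    then obtain y as'' where y: "as' = y # as''" "x < y" by (cases as') auto
    have "\<forall>xs. \<exists>pre' v post u w. sc_run pat1_32 xs (x # as' @ b # rest) (out @ pre) = pre' @ v # post \<and>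
          u \<in> set pre' \<and> w \<in> set post \<and> w < u \<and> u < v"
    proof
      fix xs
      from below[of pat1_32 xs "[x]" y "as'' @ b # rest" "out @ pre"] obtain w1 w2 where
        w: "sc_run pat1_32 xs ([x] @ y # as'' @ b # rest) (out @ pre) = (out @ pre) @ w1 @ y # w2"
        "set [x] \<subseteq> set w1" "set (as'' @ b # rest) \<subseteq> set w2" by blast
      show "\<exists>pre' v post u w. sc_run pat1_32 xs (x # as' @ b # rest) (out @ pre) = pre' @ v # post \<and>
          u \<in> set pre' \<and> w \<in> set post \<and> w < u \<and> u < v"
        using w y bx by (intro exI[of _ "(out @ pre) @ w1"] exI[of _ y] exI[of _ w2] exI[of _ x] exI[of _ b]) auto
    qed
    then show ?thesis using ins by blast
  next
    assume nxm: "\<not> x < m"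
    have one: "out \<noteq> []" using nxm xK inv by (cases "out = []") auto
    then have mo: "m = last out" "last out \<in> set out" using inv by auto
    then have "m < x" using nxm fresh by (metis UnI2 linorder_neqE_nat)
    have bm: "b < m" using mo inv by auto
    have "\<forall>xs. \<exists>pre' v post u w. sc_run pat1_32 xs (x # as' @ b # rest) (out @ pre) = pre' @ v # post \<and>
          u \<in> set pre' \<and> w \<in> set post \<and> w < u \<and> u < v"
    proof
      fix xs
      from below[of pat1_32 xs "[]" x "as' @ b # rest" "out @ pre"] obtain w1 w2 where
        w: "sc_run pat1_32 xs ([] @ x # as' @ b # rest) (out @ pre) = (out @ pre) @ w1 @ x # w2"
        "set (as' @ b # rest) \<subseteq> set w2" by blast
      show "\<exists>pre' v post u w. sc_run pat1_32 xs (x # as' @ b # rest) (out @ pre) = pre' @ v # post \<and>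
          u \<in> set pre' \<and> w \<in> set post \<and> w < u \<and> u < v"
        using w mo \<open>m < x\<close> bm by (intro exI[of _ "(out @ pre) @ w1"] exI[of _ x] exI[of _ w2] exI[of _ m] exI[of _ b]) auto
    qed
    then show ?thesis using ins by blast
  qed
qed

lemma gd_decomp:
  "\<not> gd s xs \<Longrightarrow> \<exists>pre x post. xs = pre @ x # post \<and> gd s pre \<and> \<not> ok (foldl step s pre) x"
proof (induction xs arbitrary: s)
  case Nil
  then show ?case by simp
next
  case (Cons y ys)
  show ?case
  proof (cases "ok s y")
    case False
    then show ?thesis by (intro exI[of _ "[]"] exI[of _ y] exI[of _ ys]) simp
  next
    case True
    then have "\<not> gd (step s y) ys" using Cons.prems by simp
    from Cons.IH[OF this] obtain pre x post where
      "ys = pre @ x # post" "gd (step s y) pre" "\<not> ok (foldl step (step s y) pre) x" by blast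
    then show ?thesis using True by (intro exI[of _ "y # pre"] exI[of _ x] exI[of _ post]) simp
  qed
qed

lemma perms_props:
  assumes "\<tau> \<in> perms n" shows "distinct \<tau>" "set \<tau> = {1..n}" "length \<tau> = n"
proof -
  show d: "distinct \<tau>" and s: "set \<tau> = {1..n}" using assms by (auto simp: perms_def)
  show "length \<tau> = n" using distinct_card[OF d] s by simp
qed

lemma SC_props:
  assumes "\<tau> \<in> perms n"
  shows "set (SC \<sigma> \<tau>) = set \<tau>" "distinct (SC \<sigma> \<tau>)"
proof -
  from sc_run_out[of \<sigma> \<tau> "[]" "[]"] obtain r where r: "sc_run \<sigma> \<tau> [] [] = r" "set r = set \<tau>"
    "length r = length \<tau>" by auto
  show e: "set (SC \<sigma> \<tau>) = set \<tau>" using r by (simp add: SC_def)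
  have "card (set (SC \<sigma> \<tau>)) = length (SC \<sigma> \<tau>)"
    using e r distinct_card[OF perms_props(1)[OF assms]] by (simp add: SC_def)
  then show "distinct (SC \<sigma> \<tau>)" by (rule card_distinct)
qed

theorem sortA:
  assumes perm: "\<tau> \<in> perms n"
  shows "west_s (SC pat1_32 \<tau>) = [1..<Suc n] \<longleftrightarrow> gd (init (Suc n)) \<tau>"
proof -
  define K where "K = Suc n"
  have dist: "distinct \<tau>" and setT: "set \<tau> = {1..n}" using perms_props[OF perm] by auto
  have tK: "\<forall>x\<in>set \<tau>. x < K" using setT K_def by auto
  have srt: "sorted_wrt (<) [1..<Suc n]" by (rule sorted_wrt_upt)
  have setU: "set [1..<Suc n] = {1..n}" by auto
  show ?thesis
  proof (cases \<tau>)
    case Nil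
    then have "n = 0" using setT by simp
    then show ?thesis using Nil by (simp add: SC_def west_s_def)
  next
    case (Cons x0 \<tau>')
    have run0: "SC pat1_32 \<tau> = sc_run pat1_32 \<tau>' [x0] []" using Cons by (simp add: SC_def)
    have x0K: "x0 < K" using tK Cons by simp
    have st0: "step (init K) x0 = (x0, x0, K, K)" using x0K by (simp add: init_def)
    have ok0: "ok (init K) x0" using x0K by (simp add: init_def)
    have inv0: "InvLA K (x0, x0, K, K) [x0] [] []" by simp
    have gdeq: "gd (init K) \<tau> = gd (x0, x0, K, K) \<tau>'" using Cons st0 ok0 by simp
    have t'K: "\<forall>x\<in>set \<tau>'. x < K" using tK Cons by simp
    show ?thesis
    proof
      assume eq: "west_s (SC pat1_32 \<tau>) = [1..<Suc n]"
      show "gd (init (Suc n)) \<tau>"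
      proof (rule ccontr)
        assume ng: "\<not> gd (init (Suc n)) \<tau>"
        from gd_decomp[OF ng] obtain pre x post where
          dec: "\<tau> = pre @ x # post" "gd (init K) pre" "\<not> ok (foldl step (init K) pre) x"
          unfolding K_def by blast
        have "pre \<noteq> []"
        proof
          assume "pre = []"
          then have "x < K" using dec(1) tK by auto
          then show False using dec(3) \<open>pre = []\<close> by (simp add: init_def)
        qed
        then obtain pre' where pre': "pre = x0 # pre'" "\<tau>' = pre' @ x # post"
          using dec(1) Cons by (cases pre) auto
        have gpre: "gd (x0, x0, K, K) pre'" using dec(2) pre'(1) st0 ok0 by simp
        have p'K: "\<forall>y\<in>set pre'. y < K" using t'K pre'(2) by simp
        from inv_scs[OF inv0 gpre p'K] obtain L' A' out' where
          sc: "scs pat1_32 pre' [x0] [] = (rev A' @ rev L', out')"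
          "InvLA K (foldl step (x0, x0, K, K) pre') L' A' out'" by auto
        obtain b p m c where bpmc: "foldl step (x0, x0, K, K) pre' = (b, p, m, c)" by (cases "foldl step (x0, x0, K, K) pre'") auto
        have fs: "foldl step (init K) pre = (b, p, m, c)" using pre'(1) st0 bpmc by simp
        from scs_out[of pat1_32 pre' "[x0]" "[]"] sc(1) have
          "set out' \<union> set (rev A' @ rev L') = set pre' \<union> {x0}" by auto
        moreover have "x \<notin> set pre' \<union> {x0}" using dist dec(1) pre'(1) by auto
        ultimately have fresh: "x \<notin> set L' \<union> set A' \<union> set out'" by auto
        have xK: "x < K" using tK dec(1) by auto
        from inv_bad[OF sc(2)[unfolded bpmc] _ xK fresh] dec(3) fs obtain st'' out'' where
          bad: "sc_insert pat1_32 x (rev A' @ rev L') out' = (st'', out'')"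
          "\<forall>xs. \<exists>pre v post u w. sc_run pat1_32 xs st'' out'' = pre @ v # post \<and> u \<in> set pre \<and> w \<in> set post \<and> w < u \<and> u < v"
          by auto
        have "SC pat1_32 \<tau> = sc_run pat1_32 post st'' out''"
          unfolding run0 pre'(2) sc_run_append using sc(1) bad(1) by simp
        with bad(2) obtain pre2 v post2 u w where
          "SC pat1_32 \<tau> = pre2 @ v # post2" "u \<in> set pre2" "w \<in> set post2" "w < u" "u < v" by metis
        then have "\<not> sorted_wrt (<) (west_s (SC pat1_32 \<tau>))" by (intro west_231)
        then show False using eq srt by simp
      qed
    next
      assume g: "gd (init (Suc n)) \<tau>"
      then have "gd (x0, x0, K, K) \<tau>'" using gdeq K_def by simp
      from inv_run_good[OF inv0 this t'K] obtain D I where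
        DI: "sc_run pat1_32 \<tau>' [x0] [] = D @ I" "sorted_wrt (>) D" "sorted_wrt (<) I" by auto
      have "distinct (D @ I)" using SC_props(2)[OF perm, of pat1_32] run0 DI(1) by simp
      then have disj: "set D \<inter> set I = {}" by simp
      from west_V[OF DI(2,3) disj] obtain Lst where
        W: "west_s (D @ I) = Lst" "sorted_wrt (<) Lst" "set Lst = set D \<union> set I" by blast
      have "set Lst = {1..n}" using W(3) SC_props(1)[OF perm, of pat1_32] run0 DI(1) setT by simp
      then have "Lst = [1..<Suc n]" using strict_sorted_equal[OF srt W(2)] setU by simp
      then show "west_s (SC pat1_32 \<tau>) = [1..<Suc n]" using W(1) run0 DI(1) by simp
    qed
  qed
qed


definition eqv :: "nat \<Rightarrow> nat \<Rightarrow> nat \<Rightarrow> bool" where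
  "eqv M u v \<longleftrightarrow> u = v \<or> (M \<le> u \<and> M \<le> v)"

lemma eqv_min: "eqv M a a' \<Longrightarrow> eqv M c c' \<Longrightarrow> eqv M (min a c) (min a' c')"
  unfolding eqv_def by auto

lemma gd_eqv:
  "\<forall>x\<in>set xs. x < M \<Longrightarrow> eqv M b b' \<Longrightarrow> eqv M m m' \<Longrightarrow> eqv M c c' \<Longrightarrow>
   gd (b, p, m, c) xs = gd (b', p, m', c') xs"
proof (induction xs arbitrary: b p m c b' m' c')
  case Nil
  then show ?case by simp
next
  case (Cons x xs)
  have xM: "x < M" using Cons.prems by simp
  have eb: "x < b \<longleftrightarrow> x < b'" using Cons.prems(2) xM unfolding eqv_def by auto
  have em: "x < m \<longleftrightarrow> x < m'" using Cons.prems(3) xM unfolding eqv_def by auto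
  show ?case
  proof (cases "x < b")
    case True
    then have "x < b'" using eb by simp
    have "gd (x, x, min m c, min m c) xs = gd (x, x, min m' c', min m' c') xs"
      using Cons.prems eqv_min[OF Cons.prems(3,4)] by (intro Cons.IH) (auto simp: eqv_def)
    then show ?thesis using True \<open>x < b'\<close> by simp
  next
    case False
    then have "\<not> x < b'" using eb by simp
    have "eqv M (min c x) (min c' x)" using Cons.prems(4) xM unfolding eqv_def by auto
    then have "gd (b, x, m, min c x) xs = gd (b', x, m', min c' x) xs"
      using Cons.prems by (intro Cons.IH) auto
    then show ?thesis using False \<open>\<not> x < b'\<close> em by simp
  qed
qed

lemma gd_init_eqv:
  "\<forall>x\<in>set xs. x < M \<Longrightarrow> M \<le> K \<Longrightarrow> M \<le> K' \<Longrightarrow> gd (init K) xs = gd (init K') xs"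
  unfolding init_def by (intro gd_eqv) (auto simp: eqv_def)

fun Bnd :: "nat \<Rightarrow> gst \<Rightarrow> bool" where
  "Bnd n (b, p, m, c) \<longleftrightarrow> (b \<le> n \<or> b = n + 2) \<and> p \<le> n \<and> (m \<le> n \<or> m = n + 2) \<and> (c \<le> n \<or> c = n + 2)"

lemma Bnd_step: "Bnd n s \<Longrightarrow> x \<le> n \<Longrightarrow> Bnd n (step s x)"
  by (cases s) (auto simp: min_def)

lemma Bnd_foldl: "Bnd n s \<Longrightarrow> \<forall>x\<in>set xs. x \<le> n \<Longrightarrow> Bnd n (foldl step s xs)"
proof (induction xs arbitrary: s)
  case Nil then show ?case by simp
next
  case (Cons x xs)
  have "Bnd n (step s x)" using Cons.prems by (intro Bnd_step) auto
  then show ?case using Cons.IH Cons.prems(2) by (simp del: Bnd.simps)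
qed

lemma Bnd_init: "Bnd n (init (n + 2))" by (simp add: init_def)

lemma b_foldl_ne: "xs \<noteq> [] \<Longrightarrow> \<forall>x\<in>set xs. x \<le> n \<Longrightarrow> fst (foldl step s xs) \<le> n"
proof (induction xs arbitrary: s rule: rev_induct)
  case Nil then show ?case by simp
next
  case (snoc x xs)
  obtain b p m c where s: "foldl step s xs = (b, p, m, c)" by (cases "foldl step s xs") auto
  show ?case
  proof (cases "xs = []")
    case True
    then show ?thesis using snoc.prems by (cases s) auto
  next
    case False
    have "fst (foldl step s xs) \<le> n" using snoc.IH False snoc.prems(2) by auto
    then have "b \<le> n" using s by simp
    then show ?thesis using s snoc.prems by auto
  qed
qed

lemma m_mono_step: "fst (snd (snd (step s x))) \<le> fst (snd (snd s))"
  by (cases s) auto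

lemma m_mono: "fst (snd (snd (foldl step s xs))) \<le> fst (snd (snd s))"
proof (induction xs arbitrary: s)
  case Nil then show ?case by simp
next
  case (Cons x xs)
  show ?case using order_trans[OF Cons.IH[of "step s x"] m_mono_step[of s x]] by simp
qed

lemma ins_gd:
  assumes "Bnd n (b, p, m, c)" "b \<le> n" "\<forall>z\<in>set zs. z \<le> n"
  shows "gd (b, p, m, c) (Suc n # zs) \<longleftrightarrow> m = n + 2 \<and> (zs = [] \<or> hd zs < b) \<and> gd (b, p, m, c) zs"
proof (cases "m = n + 2")
  case False
  then have "m \<le> n" using assms(1) by simp
  then show ?thesis using False assms(2) by simp
next
  case True
  have okN: "ok (b, p, m, c) (Suc n)" using True assms by simp
  have stN: "step (b, p, m, c) (Suc n) = (b, Suc n, m, min c (Suc n))" using assms(2) by simp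
  show ?thesis
  proof (cases zs)
    case Nil
    then show ?thesis using okN True by simp
  next
    case (Cons z zs')
    have z: "z \<le> n" "\<forall>y\<in>set zs'. y < Suc n" using assms(3) Cons by auto
    have e: "gd (z, z, min m (min c (Suc n)), min m (min c (Suc n))) zs' =
             gd (z, z, min m c, min m c) zs'"
    proof -
      have E: "eqv (Suc n) (min m (min c (Suc n))) (min m c)"
        using True assms(1) by (cases "c \<le> n") (auto simp: eqv_def min_def)
      have E2: "eqv (Suc n) z z" by (simp add: eqv_def)
      show ?thesis by (rule gd_eqv[OF z(2) E2 E E])
    qed
    show ?thesis using okN stN Cons True e z(1) by auto
  qed
qed

lemma ins0_gd:
  assumes "\<forall>z\<in>set zs. z \<le> n"
  shows "gd (init (n + 2)) (Suc n # zs) \<longleftrightarrow> gd (init (n + 2)) zs"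
proof (cases zs)
  case Nil
  then show ?thesis by (simp add: init_def)
next
  case (Cons z zs')
  then have "z \<le> n" using assms by simp
  then show ?thesis using Cons by (simp add: init_def)
qed

fun drun :: "nat list \<Rightarrow> nat" where
  "drun [] = 0"
| "drun [x] = 1"
| "drun (x # y # zs) = (if y < x then Suc (drun (y # zs)) else 1)"

lemma drun_Cons: "drun (x # ys) = (if ys = [] then 1 else if hd ys < x then Suc (drun ys) else 1)"
  by (cases ys) auto

lemma drun_le: "drun xs \<le> length xs"
  by (induction xs rule: drun.induct) auto

lemma drun_pos: "xs \<noteq> [] \<Longrightarrow> 1 \<le> drun xs"
  by (cases xs) (auto simp: drun_Cons)

lemma drun_iff:
  "k \<le> length xs \<Longrightarrow> sorted_wrt (>) (take k xs) \<longleftrightarrow> k \<le> drun (xs::nat list)"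
proof (induction xs arbitrary: k)
  case Nil
  then show ?case by simp
next
  case (Cons x xs)
  show ?case
  proof (cases k)
    case 0
    then show ?thesis by simp
  next
    case (Suc k')
    show ?thesis
    proof (cases "k' = 0")
      case True
      then show ?thesis using Suc drun_pos[of "x # xs"] by simp
    next
      case False
      then have ne: "xs \<noteq> []" using Cons.prems Suc by auto
      have hdin: "hd xs \<in> set (take k' xs)" using ne False by (cases xs; cases k') auto
      have IH: "sorted_wrt (>) (take k' xs) \<longleftrightarrow> k' \<le> drun xs" using Cons.prems Suc by (intro Cons.IH) simp
      show ?thesis
      proof (cases "hd xs < x")
        case True
        have "sorted_wrt (>) (take k' xs) \<Longrightarrow> \<forall>y\<in>set (take k' xs). y < x"
        proof
          fix y assume s: "sorted_wrt (>) (take k' xs)" and y: "y \<in> set (take k' xs)"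
          have "hd (take k' xs) = hd xs" using ne False by (cases xs) auto
          then have "y \<le> hd xs" using s y by (cases "take k' xs") (auto simp: less_imp_le)
          then show "y < x" using True by simp
        qed
        then show ?thesis using Suc IH True ne by (auto simp: drun_Cons)
      next
        case False
        then show ?thesis using Suc hdin \<open>k' \<noteq> 0\<close> ne by (auto simp: drun_Cons)
      qed
    qed
  qed
qed

lemma drun_ins0: "xs \<noteq> [] \<Longrightarrow> \<forall>x\<in>set xs. x < N \<Longrightarrow> drun (N # xs) = Suc (drun xs)"
  by (cases xs) (auto simp: drun_Cons)

lemma drun_ins:
  "1 \<le> k \<Longrightarrow> k \<le> length xs \<Longrightarrow> \<forall>x\<in>set xs. x < N \<Longrightarrow>
   drun (take k xs @ N # drop k xs) = min k (drun xs)"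
proof (induction xs arbitrary: k)
  case Nil
  then show ?case by simp
next
  case (Cons x xs)
  obtain k' where k: "k = Suc k'" using Cons.prems by (cases k) auto
  show ?case
  proof (cases "k' = 0")
    case True
    then show ?thesis using k Cons.prems drun_pos[of "x # xs"] by (simp add: drun_Cons)
  next
    case False
    then have ne: "xs \<noteq> []" using Cons.prems k by auto
    have IH: "drun (take k' xs @ N # drop k' xs) = min k' (drun xs)"
      using Cons.prems k False by (intro Cons.IH) auto
    have hd: "hd (take k' xs @ N # drop k' xs) = hd xs" using ne False by (cases xs) auto
    show ?thesis using IH hd ne k by (auto simp: drun_Cons)
  qed
qed

lemma dec_state:
  "sorted_wrt (>) xs \<Longrightarrow> xs \<noteq> [] \<Longrightarrow> hd xs < b \<Longrightarrow>
   foldl step (b, p, K, K) xs = (last xs, last xs, K, K)"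
proof (induction xs arbitrary: b p)
  case Nil then show ?case by simp
next
  case (Cons x xs)
  show ?case
  proof (cases "xs = []")
    case True then show ?thesis using Cons.prems by simp
  next
    case False
    have "hd xs < x" using Cons.prems False by (cases xs) auto
    then show ?thesis using Cons False by simp
  qed
qed

lemma dec_state_init:
  "sorted_wrt (>) xs \<Longrightarrow> xs \<noteq> [] \<Longrightarrow> \<forall>x\<in>set xs. x < K \<Longrightarrow>
   foldl step (init K) xs = (last xs, last xs, K, K)"
  unfolding init_def by (intro dec_state) (auto simp: hd_in_set)

lemma le_K_foldl:
  "\<forall>x\<in>set xs. x < K \<Longrightarrow> (case foldl step (init K) xs of (b, p, m, c) \<Rightarrow> b \<le> K \<and> m \<le> K \<and> c \<le> K)"
proof (induction xs rule: rev_induct)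
  case Nil then show ?case by (simp add: init_def)
next
  case (snoc x xs)
  then show ?case by (cases "foldl step (init K) xs") (auto simp: min_def)
qed

lemma KK_dec:
  "\<forall>x\<in>set xs. x < K \<Longrightarrow> foldl step (init K) xs = (b, p, K, K) \<Longrightarrow> sorted_wrt (>) xs"
proof (induction xs arbitrary: b p rule: rev_induct)
  case Nil then show ?case by simp
next
  case (snoc x xs)
  obtain b1 p1 m1 c1 where s1: "foldl step (init K) xs = (b1, p1, m1, c1)"
    by (cases "foldl step (init K) xs") auto
  have bnd: "b1 \<le> K" "m1 \<le> K" "c1 \<le> K" using le_K_foldl[of xs K] snoc.prems(1) s1 by auto
  have xK: "x < K" using snoc.prems by simp
  have st: "step (b1, p1, m1, c1) x = (b, p, K, K)" using snoc.prems(2) s1 by simp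
  show ?case
  proof (cases "x < b1")
    case False
    have "step (b1, p1, m1, c1) x = (b1, x, m1, min c1 x)" using False by simp
    then have "min c1 x = K" using st by (metis Pair_inject)
    moreover have "min c1 x \<le> x" by simp
    ultimately show ?thesis using xK by linarith
  next
    case True
    then have "min m1 c1 = K" using st by simp
    then have mc: "m1 = K" "c1 = K" using bnd by (auto simp: min_def split: if_splits)
    then have sx: "sorted_wrt (>) xs" using snoc.IH[of b1 p1] snoc.prems(1) s1 by simp
    have "\<forall>y\<in>set xs. x < y"
    proof (cases "xs = []")
      case False
      then have "foldl step (init K) xs = (last xs, last xs, K, K)"
        using dec_state_init[OF sx] snoc.prems(1) by simp
      then have "b1 = last xs" using s1 by simp
      then show ?thesis using True last_le_dec[OF sx] by fastforce
    qed simp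
    then show ?thesis using sx by (simp add: sorted_wrt_append)
  qed
qed


definition G :: "nat \<Rightarrow> nat list set" where
  "G n = {\<tau> \<in> perms n. gd (init (Suc n)) \<tau>}"

definition ins :: "nat \<Rightarrow> nat \<Rightarrow> nat list \<Rightarrow> nat list" where
  "ins N k xs = take k xs @ N # drop k xs"

definition S :: "nat \<Rightarrow> nat list \<Rightarrow> nat \<Rightarrow> gst" where
  "S n xs k = foldl step (init (n + 2)) (take k xs)"

definition vc :: "nat \<Rightarrow> nat list \<Rightarrow> nat \<Rightarrow> bool" where
  "vc n xs k \<longleftrightarrow> fst (snd (snd (S n xs k))) = n + 2 \<and> (k = length xs \<or> xs ! k < fst (S n xs k))"

context
  fixes n :: nat and \<sigma> :: "nat list"
  assumes sG: "\<sigma> \<in> G n" and n1: "1 \<le> n"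
begin

lemma sp: "distinct \<sigma>" "set \<sigma> = {1..n}" "length \<sigma> = n"
  using sG perms_props unfolding G_def by auto

lemma sle: "\<forall>x\<in>set \<sigma>. x \<le> n" using sp by auto

lemma gd2: "gd (init (n + 2)) \<sigma>"
proof -
  have "gd (init (Suc n)) \<sigma>" using sG by (simp add: G_def)
  moreover have "\<forall>x\<in>set \<sigma>. x < Suc n" using sle by auto
  ultimately show ?thesis using gd_init_eqv[of \<sigma> "Suc n" "Suc n" "n + 2"] by simp
qed

lemma S_Bnd: "Bnd n (S n \<sigma> k)"
  unfolding S_def using sle by (intro Bnd_foldl Bnd_init) (auto dest: in_set_takeD)

lemma valid_char:
  assumes "1 \<le> k" "k \<le> length \<sigma>"
  shows "gd (init (n + 2)) (ins (Suc n) k \<sigma>) \<longleftrightarrow> vc n \<sigma> k"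
proof -
  obtain b p m c where s: "S n \<sigma> k = (b, p, m, c)" by (cases "S n \<sigma> k") auto
  have tk: "take k \<sigma> \<noteq> []" using assms n1 sp by (cases \<sigma>) auto
  have bn: "b \<le> n" using b_foldl_ne[OF tk, of n "init (n + 2)"] sle s unfolding S_def
    by (auto dest: in_set_takeD)
  have bnd: "Bnd n (b, p, m, c)" using S_Bnd[of k] unfolding s .
  have dle: "\<forall>z\<in>set (drop k \<sigma>). z \<le> n" using sle by (auto dest: in_set_dropD)
  have g: "gd (init (n + 2)) (take k \<sigma>) \<and> gd (b, p, m, c) (drop k \<sigma>)"
    using gd2 gd_append[of "init (n + 2)" "take k \<sigma>" "drop k \<sigma>"] s unfolding S_def by simp
  have "gd (init (n + 2)) (ins (Suc n) k \<sigma>) \<longleftrightarrow> gd (b, p, m, c) (Suc n # drop k \<sigma>)"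
    unfolding ins_def gd_append using g s unfolding S_def by simp
  also have "\<dots> \<longleftrightarrow> m = n + 2 \<and> (drop k \<sigma> = [] \<or> hd (drop k \<sigma>) < b)"
    using ins_gd[OF bnd bn dle] g by simp
  also have "\<dots> \<longleftrightarrow> vc n \<sigma> k"
    unfolding vc_def s using assms(2) by (cases "k = length \<sigma>") (auto simp: hd_drop_conv_nth)
  finally show ?thesis .
qed

lemma valid0: "gd (init (n + 2)) (ins (Suc n) 0 \<sigma>)"
  using ins0_gd[OF sle] gd2 by (simp add: ins_def)

lemma drun_pos_s: "1 \<le> drun \<sigma>" using drun_pos[of \<sigma>] sp(3) n1 by (cases \<sigma>) auto

lemma slt: "\<forall>x\<in>set \<sigma>. x < n + 2"
proof
  fix x assume "x \<in> set \<sigma>"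
  then have "x \<le> n" using sle by blast
  then show "x < n + 2" by simp
qed

lemma slt_take: "\<forall>x\<in>set (take k \<sigma>). x < n + 2" using slt by (meson in_set_takeD)

lemma drun_le_s: "drun \<sigma> \<le> length \<sigma>" by (rule drun_le)

lemma take_dec: "k \<le> drun \<sigma> \<Longrightarrow> sorted_wrt (>) (take k \<sigma>)"
  using drun_iff[of k \<sigma>] drun_le_s by simp

lemma S_dec: "1 \<le> k \<Longrightarrow> k \<le> drun \<sigma> \<Longrightarrow> S n \<sigma> k = (last (take k \<sigma>), last (take k \<sigma>), n + 2, n + 2)"
proof -
  assume k: "1 \<le> k" "k \<le> drun \<sigma>"
  have ne: "take k \<sigma> \<noteq> []" using k drun_le_s by (cases \<sigma>) auto
  show ?thesis unfolding S_def
    using dec_state_init[OF take_dec[OF k(2)] ne slt_take] .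
qed

lemma V1: assumes "1 \<le> k" "k < drun \<sigma>" shows "vc n \<sigma> k"
proof -
  have kl: "k < length \<sigma>" using assms drun_le_s by simp
  have e: "S n \<sigma> k = (last (take k \<sigma>), last (take k \<sigma>), n + 2, n + 2)" using S_dec assms by simp
  have tne: "take k \<sigma> \<noteq> []" using assms kl by (cases \<sigma>) auto
  have last: "last (take k \<sigma>) = \<sigma> ! (k - 1)" using assms kl tne by (simp add: last_conv_nth)
  have "sorted_wrt (>) (take (Suc k) \<sigma>)" using take_dec assms by simp
  from sorted_wrt_nth_less[OF this, of "k - 1" k] have "\<sigma> ! k < \<sigma> ! (k - 1)" using assms kl by simp
  then show ?thesis unfolding vc_def e last by simp
qed

lemma V2ex: "\<exists>k. drun \<sigma> \<le> k \<and> k \<le> length \<sigma> \<and> vc n \<sigma> k"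
proof -
  have main: "\<And>j. drun \<sigma> \<le> j \<Longrightarrow> j \<le> length \<sigma> \<Longrightarrow> fst (snd (snd (S n \<sigma> j))) = n + 2 \<Longrightarrow>
    \<exists>k. j \<le> k \<and> k \<le> length \<sigma> \<and> vc n \<sigma> k"
  proof -
    fix j
    show "drun \<sigma> \<le> j \<Longrightarrow> j \<le> length \<sigma> \<Longrightarrow> fst (snd (snd (S n \<sigma> j))) = n + 2 \<Longrightarrow>
      \<exists>k. j \<le> k \<and> k \<le> length \<sigma> \<and> vc n \<sigma> k"
    proof (induction "length \<sigma> - j" arbitrary: j)
      case 0
      then have "j = length \<sigma>" by simp
      then show ?case using 0 by (intro exI[of _ j]) (simp add: vc_def)
    next
      case (Suc t)
      then have jl: "j < length \<sigma>" by simp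
      show ?case
      proof (cases "\<sigma> ! j < fst (S n \<sigma> j)")
        case True
        then show ?thesis using Suc.prems by (intro exI[of _ j]) (simp add: vc_def)
      next
        case False
        obtain b p m c where s: "S n \<sigma> j = (b, p, m, c)" by (cases "S n \<sigma> j") auto
        have "S n \<sigma> (Suc j) = step (b, p, m, c) (\<sigma> ! j)"
          using s jl unfolding S_def by (simp add: take_Suc_conv_app_nth)
        also have "\<dots> = (b, \<sigma> ! j, m, min c (\<sigma> ! j))" using False s by simp
        finally have "fst (snd (snd (S n \<sigma> (Suc j)))) = n + 2" using Suc.prems s by simp
        moreover have "t = length \<sigma> - Suc j" using Suc.hyps(2) by simp
        moreover have "drun \<sigma> \<le> Suc j" using Suc.prems(1) by simp
        moreover have "Suc j \<le> length \<sigma>" using jl by simp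
        ultimately obtain k where "Suc j \<le> k" "k \<le> length \<sigma>" "vc n \<sigma> k"
          using Suc.hyps(1)[of "Suc j"] by blast
        then show ?thesis by (intro exI[of _ k]) auto
      qed
    qed
  qed
  have "fst (snd (snd (S n \<sigma> (drun \<sigma>)))) = n + 2" using S_dec[OF drun_pos_s] by simp
  from main[OF order_refl drun_le_s this] show ?thesis .
qed

lemma V2uniq:
  assumes "vc n \<sigma> k" "vc n \<sigma> k'" "drun \<sigma> \<le> k" "k < k'" "k' \<le> length \<sigma>"
  shows False
proof -
  obtain b p m c where s: "S n \<sigma> k = (b, p, m, c)" by (cases "S n \<sigma> k") auto
  have kl: "k < length \<sigma>" using assms by simp
  have m: "m = n + 2" and lt: "\<sigma> ! k < b" using assms(1) s kl by (auto simp: vc_def)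
  have bnd: "c \<le> n \<or> c = n + 2" using S_Bnd[of k] s by simp
  show False
  proof (cases "c = n + 2")
    case True
    have sK: "foldl step (init (n + 2)) (take k \<sigma>) = (b, p, n + 2, n + 2)" using s m True by (simp add: S_def)
    from KK_dec[OF slt_take sK] have "sorted_wrt (>) (take k \<sigma>)" .
    then have "k \<le> drun \<sigma>" using drun_iff[of k \<sigma>] kl by simp
    then have kd: "k = drun \<sigma>" using assms(3) by simp
    have e: "S n \<sigma> k = (last (take k \<sigma>), last (take k \<sigma>), n + 2, n + 2)"
      using S_dec[OF _ order.refl] kd drun_pos_s by simp
    then have bl: "b = last (take k \<sigma>)" using s by simp
    have sd: "sorted_wrt (>) (take k \<sigma>)" using take_dec kd by simp
    have ne: "take k \<sigma> \<noteq> []" using kd drun_pos_s kl by (cases \<sigma>) auto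
    have "\<forall>y\<in>set (take k \<sigma>). \<sigma> ! k < y" using last_le_dec[OF sd] bl lt by fastforce
    then have "sorted_wrt (>) (take k \<sigma> @ [\<sigma> ! k])" using sd by (simp add: sorted_wrt_append)
    then have "sorted_wrt (>) (take (Suc k) \<sigma>)" using kl by (simp add: take_Suc_conv_app_nth)
    then have "Suc k \<le> drun \<sigma>" using drun_iff[of "Suc k" \<sigma>] kl by simp
    then show False using kd by simp
  next
    case False
    then have cn: "c \<le> n" using bnd by simp
    have "S n \<sigma> (Suc k) = step (b, p, m, c) (\<sigma> ! k)"
      using s kl unfolding S_def by (simp add: take_Suc_conv_app_nth)
    also have "\<dots> = (\<sigma> ! k, \<sigma> ! k, min m c, min m c)" using lt by simp
    finally have s1: "fst (snd (snd (S n \<sigma> (Suc k)))) \<le> n" using cn m by simp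
    have "take k' \<sigma> = take (Suc k) \<sigma> @ take (k' - Suc k) (drop (Suc k) \<sigma>)"
      using take_add[of "Suc k" "k' - Suc k" \<sigma>] assms(4) by simp
    then have "S n \<sigma> k' = foldl step (S n \<sigma> (Suc k)) (take (k' - Suc k) (drop (Suc k) \<sigma>))"
      unfolding S_def by simp
    then have "fst (snd (snd (S n \<sigma> k'))) \<le> n" using m_mono s1 by (metis order_trans)
    then show False using assms(2) by (simp add: vc_def)
  qed
qed

lemma kset_card:
  assumes r1: "1 \<le> r"
  shows "card {k. k \<le> length \<sigma> \<and> gd (init (n + 2)) (ins (Suc n) k \<sigma>) \<and> drun (ins (Suc n) k \<sigma>) = r}
         = (if r \<le> Suc (drun \<sigma>) then 1 else 0)"
proof -
  let ?K = "{k. k \<le> length \<sigma> \<and> gd (init (n + 2)) (ins (Suc n) k \<sigma>) \<and> drun (ins (Suc n) k \<sigma>) = r}"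
  let ?d = "drun \<sigma>"
  have sl: "\<forall>x\<in>set \<sigma>. x < Suc n" using sle by auto
  have ne: "\<sigma> \<noteq> []" using sp n1 by auto
  have dr0: "drun (ins (Suc n) 0 \<sigma>) = Suc ?d" using drun_ins0[OF ne sl] by (simp add: ins_def)
  have drk: "\<And>k. 1 \<le> k \<Longrightarrow> k \<le> length \<sigma> \<Longrightarrow> drun (ins (Suc n) k \<sigma>) = min k ?d"
    using drun_ins sl unfolding ins_def by blast
  consider "r = Suc ?d" | "r < ?d" | "r = ?d" | "r > Suc ?d" by linarith
  then show ?thesis
  proof cases
    case 1
    have "?K = {0}"
    proof (intro set_eqI iffI)
      fix k :: nat assume "k \<in> ?K"
      then show "k \<in> {0}" using drk 1 by (cases "k = 0") (auto simp: min_def split: if_splits)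
    next
      fix k :: nat assume "k \<in> {0}"
      then show "k \<in> ?K" using valid0 dr0 1 by auto
    qed
    then show ?thesis using 1 by simp
  next
    case 2
    have "?K = {r}"
    proof (intro set_eqI iffI)
      fix k :: nat assume k: "k \<in> ?K"
      show "k \<in> {r}"
      proof (cases "k = 0")
        case True then show ?thesis using k dr0 2 by auto
      next
        case False then show ?thesis using k drk[of k] 2 by (auto simp: min_def split: if_splits)
      qed
    next
      fix k :: nat assume "k \<in> {r}"
      then have kr: "k = r" by simp
      have "k \<le> length \<sigma>" using kr 2 drun_le_s by simp
      moreover have "vc n \<sigma> k" using V1 kr r1 2 by simp
      ultimately show "k \<in> ?K" using valid_char[of k] drk[of k] kr r1 2 by auto
    qed
    then show ?thesis using 2 by simp
  next
    case 3
    obtain k0 where k0: "?d \<le> k0" "k0 \<le> length \<sigma>" "vc n \<sigma> k0" using V2ex by blast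
    have k01: "1 \<le> k0" using k0(1) drun_pos_s by simp
    have "?K = {k0}"
    proof (intro set_eqI iffI)
      fix k :: nat assume k: "k \<in> ?K"
      show "k \<in> {k0}"
      proof (cases "k = 0")
        case True then show ?thesis using k dr0 3 by auto
      next
        case False
        then have k1: "1 \<le> k" by simp
        have kl: "k \<le> length \<sigma>" using k by simp
        have "min k ?d = ?d" using k drk[OF k1 kl] 3 by simp
        then have kd: "?d \<le> k" by (simp add: min_def split: if_splits)
        have vk: "vc n \<sigma> k" using k valid_char[OF k1 kl] by simp
        show ?thesis
        proof (rule ccontr)
          assume "k \<notin> {k0}"
          then have "k < k0 \<or> k0 < k" by auto
          then show False
          proof
            assume "k < k0" then show False using V2uniq[OF vk k0(3) kd _ k0(2)] by simp
          next
            assume "k0 < k" then show False using V2uniq[OF k0(3) vk k0(1) _ kl] by simp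
          qed
        qed
      qed
    next
      fix k :: nat assume "k \<in> {k0}"
      then have kk: "k = k0" by simp
      show "k \<in> ?K" using kk k0 k01 valid_char[OF k01 k0(2)] drk[OF k01 k0(2)] 3 by auto
    qed
    then show ?thesis using 3 by simp
  next
    case 4
    have "?K = {}"
    proof (intro set_eqI iffI)
      fix k :: nat assume k: "k \<in> ?K"
      show "k \<in> {}"
      proof (cases "k = 0")
        case True then show ?thesis using k dr0 4 by auto
      next
        case False then show ?thesis using k drk[of k] 4 by (auto simp: min_def split: if_splits)
      qed
    qed simp
    then show ?thesis using 4 by simp
  qed
qed

end


lemma finite_G: "finite (G n)"
proof -
  have "G n \<subseteq> {xs. set xs \<subseteq> {1..n} \<and> length xs = n}"
    using perms_props unfolding G_def by auto
  moreover have "finite {xs. set xs \<subseteq> {1..n} \<and> length xs = n}" by (rule finite_lists_length_eq) simp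
  ultimately show ?thesis by (rule finite_subset)
qed

lemma ins_perm:
  assumes "\<sigma> \<in> perms n" "k \<le> length \<sigma>"
  shows "ins (Suc n) k \<sigma> \<in> perms (Suc n)"
proof -
  have d: "distinct \<sigma>" "set \<sigma> = {1..n}" using perms_props[OF assms(1)] by auto
  have "set (take k \<sigma>) \<union> set (drop k \<sigma>) = {1..n}" using d(2) by (metis append_take_drop_id set_append)
  moreover have "distinct (take k \<sigma> @ drop k \<sigma>)" using d(1) by simp
  moreover have "Suc n \<notin> set \<sigma>" using d(2) by auto
  ultimately show ?thesis unfolding ins_def perms_def
    by (auto simp del: append_take_drop_id dest: in_set_takeD in_set_dropD)
qed

lemma remove_G:
  assumes tG: "\<tau> \<in> G (Suc n)" and sp: "\<tau> = ys @ Suc n # zs"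
  shows "ys @ zs \<in> G n"
proof -
  have d: "distinct \<tau>" "set \<tau> = {1..Suc n}" using tG perms_props unfolding G_def by auto
  have nin: "Suc n \<notin> set ys" "Suc n \<notin> set zs" using d(1) sp by auto
  have le: "\<forall>x\<in>set ys. x \<le> n" "\<forall>x\<in>set zs. x \<le> n" using d(2) sp nin by (auto simp: le_Suc_eq)
  have perm: "ys @ zs \<in> perms n"
  proof -
    have "set (ys @ zs) = {1..n}"
    proof
      show "set (ys @ zs) \<subseteq> {1..n}" using d(2) sp le by auto
      show "{1..n} \<subseteq> set (ys @ zs)"
      proof
        fix x assume x: "x \<in> {1..n}"
        then have "x \<in> set \<tau>" using d(2) by auto
        then show "x \<in> set (ys @ zs)" using sp x by auto
      qed
    qed
    moreover have "distinct (ys @ zs)" using d(1) sp by auto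
    ultimately show ?thesis by (simp add: perms_def)
  qed
  have g: "gd (init (n + 2)) \<tau>" using tG by (simp add: G_def)
  have "gd (init (n + 2)) (ys @ zs)"
  proof (cases "ys = []")
    case True
    then show ?thesis using g sp ins0_gd[OF le(2)] by simp
  next
    case False
    obtain b p m c where s: "foldl step (init (n + 2)) ys = (b, p, m, c)"
      by (cases "foldl step (init (n + 2)) ys") auto
    have bnd: "Bnd n (b, p, m, c)" using Bnd_foldl[OF Bnd_init le(1)] s by simp
    have bn: "b \<le> n" using b_foldl_ne[OF False le(1), of "init (n + 2)"] s by simp
    have g1: "gd (init (n + 2)) ys" and g2: "gd (b, p, m, c) (Suc n # zs)"
      using g sp gd_append[of "init (n + 2)" ys "Suc n # zs"] s by auto
    have "gd (b, p, m, c) zs" using ins_gd[OF bnd bn le(2)] g2 by blast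
    then show ?thesis using g1 gd_append[of "init (n + 2)" ys zs] s by simp
  qed
  moreover have "\<forall>x\<in>set (ys @ zs). x < Suc n" using le by auto
  ultimately have "gd (init (Suc n)) (ys @ zs)"
    using gd_init_eqv[of "ys @ zs" "Suc n" "Suc n" "n + 2"] by simp
  then show ?thesis using perm by (simp add: G_def)
qed

lemma count_step:
  assumes n1: "1 \<le> n" and r1: "1 \<le> r"
  shows "card {\<tau> \<in> G (Suc n). drun \<tau> = r} = card {\<sigma> \<in> G n. r \<le> Suc (drun \<sigma>)}"
proof -
  define KS where "KS \<sigma> = {k. k \<le> length \<sigma> \<and> gd (init (n + 2)) (ins (Suc n) k \<sigma>) \<and> drun (ins (Suc n) k \<sigma>) = r}" for \<sigma>
  define f where "f = (\<lambda>(\<sigma>, k). ins (Suc n) k \<sigma>)"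
  have img: "{\<tau> \<in> G (Suc n). drun \<tau> = r} = f ` (SIGMA \<sigma>:G n. KS \<sigma>)"
  proof (intro set_eqI iffI)
    fix \<tau> assume t: "\<tau> \<in> {\<tau> \<in> G (Suc n). drun \<tau> = r}"
    then have tG: "\<tau> \<in> G (Suc n)" by simp
    have "Suc n \<in> set \<tau>" using tG perms_props unfolding G_def by auto
    then obtain ys zs where sp: "\<tau> = ys @ Suc n # zs" by (meson split_list)
    have sG: "ys @ zs \<in> G n" by (rule remove_G[OF tG sp])
    have e: "ins (Suc n) (length ys) (ys @ zs) = \<tau>" using sp by (simp add: ins_def)
    have "length ys \<in> KS (ys @ zs)" unfolding KS_def using e t by (simp add: G_def)
    then show "\<tau> \<in> f ` (SIGMA \<sigma>:G n. KS \<sigma>)" using sG e unfolding f_def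
      by (intro image_eqI[of _ _ "(ys @ zs, length ys)"]) auto
  next
    fix \<tau> assume "\<tau> \<in> f ` (SIGMA \<sigma>:G n. KS \<sigma>)"
    then obtain \<sigma> k where sk: "\<sigma> \<in> G n" "k \<in> KS \<sigma>" "\<tau> = ins (Suc n) k \<sigma>" unfolding f_def by auto
    have "\<tau> \<in> perms (Suc n)" using ins_perm sk unfolding KS_def G_def by auto
    then show "\<tau> \<in> {\<tau> \<in> G (Suc n). drun \<tau> = r}" using sk unfolding KS_def G_def by simp
  qed
  have inj: "inj_on f (SIGMA \<sigma>:G n. KS \<sigma>)"
  proof (rule inj_onI)
    fix a a' assume a: "a \<in> (SIGMA \<sigma>:G n. KS \<sigma>)" and a': "a' \<in> (SIGMA \<sigma>:G n. KS \<sigma>)" and e: "f a = f a'"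
    obtain \<sigma> k where ak: "a = (\<sigma>, k)" by (cases a) auto
    obtain \<sigma>' k' where ak': "a' = (\<sigma>', k')" by (cases a') auto
    have s: "\<sigma> \<in> G n" "k \<le> length \<sigma>" using a ak unfolding KS_def by auto
    have s': "\<sigma>' \<in> G n" "k' \<le> length \<sigma>'" using a' ak' unfolding KS_def by auto
    have nin: "Suc n \<notin> set \<sigma>" "Suc n \<notin> set \<sigma>'" using s(1) s'(1) perms_props unfolding G_def by auto
    have "take k \<sigma> @ Suc n # drop k \<sigma> = take k' \<sigma>' @ Suc n # drop k' \<sigma>'"
      using e ak ak' unfolding f_def ins_def by simp
    then have "take k \<sigma> = take k' \<sigma>' \<and> drop k \<sigma> = drop k' \<sigma>'"
      using nin by (subst (asm) append_Cons_eq_iff) (auto dest: in_set_takeD in_set_dropD)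
    moreover then have "k = k'" using s(2) s'(2) by (metis length_take min.absorb2)
    ultimately show "a = a'" using ak ak' by (metis append_take_drop_id)
  qed
  have fin: "\<forall>\<sigma>\<in>G n. finite (KS \<sigma>)" unfolding KS_def by auto
  have "card {\<tau> \<in> G (Suc n). drun \<tau> = r} = card (SIGMA \<sigma>:G n. KS \<sigma>)"
    unfolding img using card_image[OF inj] by simp
  also have "\<dots> = (\<Sum>\<sigma>\<in>G n. card (KS \<sigma>))" using finite_G fin by simp
  also have "\<dots> = (\<Sum>\<sigma>\<in>G n. if r \<le> Suc (drun \<sigma>) then 1 else 0)"
  proof (rule sum.cong)
    fix \<sigma> assume "\<sigma> \<in> G n"
    then show "card (KS \<sigma>) = (if r \<le> Suc (drun \<sigma>) then 1 else 0)"
      unfolding KS_def using kset_card[OF _ n1 r1] by simp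
  qed simp
  also have "\<dots> = card {\<sigma> \<in> G n. r \<le> Suc (drun \<sigma>)}"
    using sum.inter_filter[OF finite_G, where g="\<lambda>_. 1::nat" and P="\<lambda>\<sigma>. r \<le> Suc (drun \<sigma>)"] by simp
  finally show ?thesis .
qed


definition Q :: "nat \<Rightarrow> nat \<Rightarrow> nat" where
  "Q n r = card {\<sigma> \<in> G n. r \<le> drun \<sigma>}"

lemma G_len: "\<sigma> \<in> G n \<Longrightarrow> length \<sigma> = n"
  using perms_props unfolding G_def by auto

lemma QA: "Q m r = Q m (Suc r) + card {\<tau> \<in> G m. drun \<tau> = r}"
proof -
  have "{\<sigma> \<in> G m. r \<le> drun \<sigma>} = {\<sigma> \<in> G m. Suc r \<le> drun \<sigma>} \<union> {\<tau> \<in> G m. drun \<tau> = r}" by auto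
  moreover have "{\<sigma> \<in> G m. Suc r \<le> drun \<sigma>} \<inter> {\<tau> \<in> G m. drun \<tau> = r} = {}" by auto
  ultimately show ?thesis unfolding Q_def using finite_G[of m]
    by (simp add: card_Un_disjoint)
qed

lemma QB: "1 \<le> n \<Longrightarrow> 1 \<le> r \<Longrightarrow> card {\<tau> \<in> G (Suc n). drun \<tau> = r} = Q n (r - 1)"
proof -
  assume n1: "1 \<le> n" and r1: "1 \<le> r"
  have "{\<sigma> \<in> G n. r \<le> Suc (drun \<sigma>)} = {\<sigma> \<in> G n. r - 1 \<le> drun \<sigma>}" using r1 by auto
  then show ?thesis unfolding Q_def using count_step[OF n1 r1] by simp
qed

lemma QC: "m < r \<Longrightarrow> Q m r = 0"
proof -
  assume mr: "m < r"
  have "{\<sigma> \<in> G m. r \<le> drun \<sigma>} = {}"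
  proof (intro equals0I)
    fix \<sigma> assume "\<sigma> \<in> {\<sigma> \<in> G m. r \<le> drun \<sigma>}"
    then have "\<sigma> \<in> G m" "r \<le> drun \<sigma>" by auto
    moreover have "drun \<sigma> \<le> length \<sigma>" by (rule drun_le)
    ultimately show False using G_len mr by fastforce
  qed
  then show ?thesis unfolding Q_def by (metis card.empty)
qed

lemma QD: "Q (Suc n) 0 = Q (Suc n) (Suc 0)"
proof -
  have "{\<sigma> \<in> G (Suc n). 0 \<le> drun \<sigma>} = {\<sigma> \<in> G (Suc n). Suc 0 \<le> drun \<sigma>}"
  proof (intro Collect_cong conj_cong refl iffI)
    fix \<sigma> assume "\<sigma> \<in> G (Suc n)"
    then have "\<sigma> \<noteq> []" using G_len by fastforce
    then show "Suc 0 \<le> drun \<sigma>" using drun_pos by simp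
  qed simp
  then show ?thesis unfolding Q_def by simp
qed

lemma card_G_Q: "card (G n) = Q n 0" unfolding Q_def by simp

lemma G1: "G 1 = {[1]}"
proof
  show "G 1 \<subseteq> {[1]}"
  proof
    fix \<tau> assume t: "\<tau> \<in> G 1"
    then have "length \<tau> = 1" "set \<tau> = {1}" using perms_props unfolding G_def by auto
    then show "\<tau> \<in> {[1]}" by (cases \<tau>) auto
  qed
  show "{[1]} \<subseteq> G 1" by (simp add: G_def perms_def init_def)
qed

definition ballot :: "nat \<Rightarrow> nat \<Rightarrow> int" where
  "ballot a b = int ((a + b) choose b) - (if b = 0 then 0 else int ((a + b) choose (b - 1)))"

lemma ballot0: "ballot a 0 = 1" by (simp add: ballot_def)

lemma ballot_rec:
  assumes "1 \<le> a" "1 \<le> b"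
  shows "ballot a b = ballot a (b - 1) + ballot (a - 1) b"
proof -
  obtain a' b' where ab: "a = Suc a'" "b = Suc b'" using assms by (cases a; cases b) auto
  obtain N where N: "N = a' + b' + 1" by blast
  have e1: "a + b = Suc N" "a + (b - 1) = N" "(a - 1) + b = N" using ab N by auto
  have B1: "ballot a b = int (Suc N choose Suc b') - int (Suc N choose b')"
    unfolding ballot_def e1 using ab by (simp del: binomial_Suc_Suc)
  have B2: "ballot a (b - 1) = int (N choose b') - (if b' = 0 then 0 else int (N choose (b' - 1)))"
    unfolding ballot_def e1 using ab by (simp del: binomial_Suc_Suc)
  have B3: "ballot (a - 1) b = int (N choose Suc b') - int (N choose b')"
    unfolding ballot_def e1 using ab by (simp del: binomial_Suc_Suc)
  have P1: "Suc N choose Suc b' = (N choose b') + (N choose Suc b')" by (rule binomial_Suc_Suc)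
  have P2: "Suc N choose b' = (if b' = 0 then 1 else (N choose (b' - 1)) + (N choose b'))"
    by (cases b') (simp_all del: binomial_Suc_Suc, rule binomial_Suc_Suc)
  show ?thesis using B1 B2 B3 P1 P2 by (cases "b' = 0") simp_all
qed

lemma ballot_diag:
  assumes "1 \<le> a" shows "ballot a a = ballot a (a - 1)"
proof -
  obtain a' where a: "a = Suc a'" using assms by (cases a) auto
  have "(a' + Suc a') choose (Suc a') = (a' + Suc a') choose a'"
    using binomial_symmetric[of a' "a' + Suc a'"] by simp
  then have "ballot (a - 1) a = 0" unfolding ballot_def a by simp
  then show ?thesis using ballot_rec[OF assms assms] by simp
qed

lemma catalan_ballot:
  assumes "1 \<le> n" shows "int (catalan n) = ballot n n"
proof -
  obtain m where n: "n = Suc m" using assms by (cases n) auto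
  have k1: "(n + 1) * ((2 * n) choose m) = n * ((2 * n) choose n)"
  proof -
    have "(2 * n - m) * ((2 * n) choose m) = 2 * n * ((2 * n - 1) choose m)" by (rule binomial_absorb_comp)
    moreover have "Suc m * ((2 * n) choose Suc m) = 2 * n * ((2 * n - 1) choose m)" by (rule binomial_absorption)
    ultimately show ?thesis using n by simp
  qed
  have le: "(2 * n) choose m \<le> (2 * n) choose n"
  proof -
    have "Suc n * ((2 * n) choose m) \<le> Suc n * ((2 * n) choose n)" using k1 by simp
    then show ?thesis by (rule Suc_mult_le_cancel1[THEN iffD1])
  qed
  define T where "T = ((2 * n) choose n) - ((2 * n) choose m)"
  have nm: "n - 1 = m" "n \<noteq> 0" using n by simp_all
  have "ballot n n = int ((n + n) choose n) - int ((n + n) choose m)"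
    unfolding ballot_def using nm by (simp del: binomial_Suc_Suc)
  also have "\<dots> = int T" unfolding T_def using le by (simp add: of_nat_diff mult_2 del: binomial_Suc_Suc)
  finally have bT: "ballot n n = int T" .
  define A where "A = (2 * n) choose n"
  define B where "B = (2 * n) choose m"
  have "(n + 1) * T = (n + 1) * A - (n + 1) * B" unfolding T_def A_def B_def by (rule diff_mult_distrib2)
  also have "\<dots> = (n + 1) * A - n * A" using k1 unfolding A_def B_def by (simp only:)
  also have "\<dots> = A" by (simp add: algebra_simps)
  finally have TA: "(n + 1) * T = A" .
  have "catalan n = A div (n + 1)" unfolding catalan_def A_def ..
  also have "\<dots> = T" unfolding TA[symmetric] by (rule nonzero_mult_div_cancel_left) simp
  finally have "catalan n = T" .
  then show ?thesis using bT by simp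
qed

lemma Q_formula: "1 \<le> n \<Longrightarrow> r \<le> n \<Longrightarrow> int (Q n r) = ballot n (n - r)"
proof (induction n arbitrary: r rule: nat_induct_at_least)
  case base
  then have r: "r \<le> 1" by simp
  have s: "{\<sigma> \<in> G 1. r \<le> drun \<sigma>} = {[1]}" using r unfolding G1 by auto
  have q: "Q 1 r = 1" unfolding Q_def s by simp
  show ?case
  proof (cases "r = 0")
    case True
    have "ballot 1 1 = 1" unfolding ballot_def by (simp add: numeral_2_eq_2)
    then show ?thesis using q True by simp
  next
    case False
    then have "r = 1" using r by simp
    then show ?thesis using q by (simp add: ballot0)
  qed
next
  case (Suc n)
  have IH: "\<And>r. r \<le> n \<Longrightarrow> int (Q n r) = ballot n (n - r)" using Suc.IH by blast
  have down: "\<And>t. \<forall>r. Suc n - r = t \<longrightarrow> 1 \<le> r \<longrightarrow> r \<le> Suc n \<longrightarrow> int (Q (Suc n) r) = ballot (Suc n) (Suc n - r)"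
  proof -
    fix t show "\<forall>r. Suc n - r = t \<longrightarrow> 1 \<le> r \<longrightarrow> r \<le> Suc n \<longrightarrow> int (Q (Suc n) r) = ballot (Suc n) (Suc n - r)"
    proof (induction t)
      case 0
      show ?case
      proof (intro allI impI)
        fix r assume r: "Suc n - r = 0" "1 \<le> r" "r \<le> Suc n"
        then have rr: "r = Suc n" by simp
        have "Q (Suc n) r = Q (Suc n) (Suc r) + Q n (r - 1)" using QA[of "Suc n" r] QB[OF \<open>1 \<le> n\<close> r(2)] by simp
        also have "\<dots> = Q n n" using QC[of "Suc n" "Suc r"] rr by simp
        finally have "int (Q (Suc n) r) = ballot n 0" using IH[of n] by simp
        then show "int (Q (Suc n) r) = ballot (Suc n) (Suc n - r)" using rr by (simp add: ballot0)
      qed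
    next
      case (Suc t)
      show ?case
      proof (intro allI impI)
        fix r assume r: "Suc n - r = Suc t" "1 \<le> r" "r \<le> Suc n"
        have t: "Suc n - Suc r = t" and le: "Suc r \<le> Suc n" using r by auto
        have one: "1 \<le> Suc r" by simp
        have ih: "int (Q (Suc n) (Suc r)) = ballot (Suc n) (Suc n - Suc r)"
          using Suc.IH[rule_format, OF t one le] .
        have "Q (Suc n) r = Q (Suc n) (Suc r) + Q n (r - 1)" using QA[of "Suc n" r] QB[OF \<open>1 \<le> n\<close> r(2)] by simp
        then have "int (Q (Suc n) r) = ballot (Suc n) (Suc n - Suc r) + ballot n (n - (r - 1))"
          using ih IH[of "r - 1"] r by simp
        also have "\<dots> = ballot (Suc n) (Suc n - r)"
        proof -
          have b1: "1 \<le> Suc n - r" using r by simp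
          have "ballot (Suc n) (Suc n - r) = ballot (Suc n) (Suc n - r - 1) + ballot (Suc n - 1) (Suc n - r)"
            using ballot_rec[OF _ b1] by simp
          moreover have "Suc n - r - 1 = Suc n - Suc r" "Suc n - 1 = n" "n - (r - 1) = Suc n - r" using r by auto
          ultimately show ?thesis by simp
        qed
        finally show "int (Q (Suc n) r) = ballot (Suc n) (Suc n - r)" .
      qed
    qed
  qed
  show ?case
  proof (cases "r = 0")
    case True
    have "int (Q (Suc n) 0) = int (Q (Suc n) 1)" using QD[of n] by simp
    also have "\<dots> = ballot (Suc n) n" using down[of "Suc n - 1"] by simp
    also have "\<dots> = ballot (Suc n) (Suc n)" using ballot_diag[of "Suc n"] by simp
    finally show ?thesis using True by simp
  next
    case False
    then show ?thesis using down[of "Suc n - r"] Suc.prems by simp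
  qed
qed

lemma Sort_eq_G: "Sort_SC n pat1_32 = G n"
  unfolding Sort_SC_def G_def
proof (rule Collect_cong)
  fix \<tau>
  have e: "[1..<n + 1] = [1..<Suc n]" by simp
  show "(\<tau> \<in> perms n \<and> west_s (SC pat1_32 \<tau>) = [1..<n + 1]) = (\<tau> \<in> perms n \<and> gd (init (Suc n)) \<tau>)"
    unfolding e using sortA[of \<tau> n] by blast
qed

theorem mainTheorem11:
  fixes n :: nat
  assumes "n \<ge> 1"
  shows "card (Sort_SC n pat1_32) = catalan n"
proof -
  have "int (card (Sort_SC n pat1_32)) = int (Q n 0)" using Sort_eq_G card_G_Q by simp
  also have "\<dots> = ballot n n" using Q_formula[OF assms, of 0] by simp
  also have "\<dots> = int (catalan n)" using catalan_ballot[OF assms] by simp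
  finally show ?thesis by simp
qed


end
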